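(* Let $\ell\ge 1$ and $n,m_1,\dots,m_\ell$ be positive integers, $m:=\sum_{i=1}^\ell m_i$. For $i=1,\dots,\ell$ let $C_i\subseteq\mathbb{R}^{m_i}$ be a nonempty closed convex set and $A_i\in\mathbb{R}^{m_i\times n}$ a nonzero matrix, and let $\bar v\in\mathbb{R}^n$; assume $\bigcap_{i=1}^\ell A_i^{-1}C_i\neq\emptyset$. Write $\mathbf y=(y_1,\dots,y_\ell)\in\mathbb{R}^m$ with $y_i\in\mathbb{R}^{m_i}$, $\mathbf A^T\mathbf y:=\sum_{i=1}^\ell A_i^Ty_i$, $D:=C_1\times\cdots\times C_\ell$, $g(\mathbf y):=\frac12\|\mathbf A^T\mathbf y-\bar v\|^2-\frac12\|\bar v\|^2$ and $d(\mathbf y):=g(\mathbf y)+\sigma_D(\mathbf y)$. Let $\{\mathbf y^t\}$ be generated by the following algorithm: set $\gamma_i:=\lambda_{\max}(A_i^TA_i)$, $y_i^0:=0\in\mathbb{R}^{m_i}$, $x^0_\ell:=\bar v$; for $t=0,1,2,\dots$ set $x^{t+1}_0:=x^t_\ell$ and for $i=1,\dots,\ell$ compute $$x^{t+1}_i=(I-\gamma_i^{-1}A_i^TA_i)x^{t+1}_{i-1}+\gamma_i^{-1}A_i^T\operatorname{Proj}_{C_i}(\gamma_iy_i^t+A_ix^{t+1}_{i-1}),$$ $$y^{t+1}_i=y_i^t+\gamma_i^{-1}A_ix^{t+1}_{i-1}-\gamma_i^{-1}\operatorname{Proj}_{C_i}(\gamma_iy^t_i+A_ix^{t+1}_{i-1}),$$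 then set $\mathbf y^{t+1}:=(y^{t+1}_1,\dots,y^{t+1}_\ell)$. For $i=1,\dots,\ell$ let $\tilde{\mathbf y}^{t+1}_{i-1}:=(y^{t+1}_1,\dots,y^{t+1}_{i-1},y^t_i,\dots,y^t_\ell)$ and $\tilde{\mathbf y}^{t+1}_\ell:=\mathbf y^{t+1}$. Then: (i) for each $i=1,\dots,\ell$ and $t\ge0$, $d(\tilde{\mathbf y}^{t+1}_i)-d(\tilde{\mathbf y}^{t+1}_{i-1})\le\frac12\Delta_i^t\le-\frac{\gamma_i}{2}\|y_i^{t+1}-y_i^t\|^2$, where $\Delta_i^t:=\langle\nabla_{y_i}g(\tilde{\mathbf y}^{t+1}_{i-1}),y_i^{t+1}-y_i^t\rangle+\sigma_D(\tilde{\mathbf y}^{t+1}_i)-\sigma_D(\tilde{\mathbf y}^{t+1}_{i-1})$; (ii) there exists $c>0$ such that $d(\mathbf y^{t+1})-d(\mathbf y^t)\le-c\|\mathbf y^{t+1}-\mathbf y^t\|^2$ for all $t$; (iii) $\lim_{t\to\infty}\|\mathbf y^{t+1}-\mathbf y^t\|=0$; (iv) $\lim_{t\to\infty}\operatorname{dist}(\mathbf 0,\partial d(\mathbf y^t))=0$; (v) every accumulation point of $\{\mathbf y^t\}$ is a minimizer of $d$.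
   Context: $\sigma_C(y):=\sup_{u\in C}\langle y,u\rangle$ is the support function of $C$, so $\sigma_D(\mathbf y)=\sum_i\sigma_{C_i}(y_i)$. $\operatorname{Proj}_C$ is the Euclidean projection onto $C$. $\partial d$ is the convex subdifferential of $d$, $\lambda_{\max}$ the largest eigenvalue, and $\operatorname{dist}(x,S):=\inf_{s\in S}\|x-s\|$. *)

theory Defs
  imports Complex_Main "HOL-Library.Extended_Real"
begin

text \<open>Vectors of R^k are represented as functions nat => real vanishing from index k on.
Matrices of size r x c are functions nat => nat => real (row, column), of which only
entries with row < r and column < c are used.\<close>

definition Rk :: "nat \<Rightarrow> (nat \<Rightarrow> real) set" where
  "Rk k = {v. \<forall>j\<ge>k. v j = 0}"

definition vinner :: "nat \<Rightarrow> (nat \<Rightarrow> real) \<Rightarrow> (nat \<Rightarrow> real) \<Rightarrow> real" where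
  "vinner k u v = (\<Sum>j<k. u j * v j)"

definition vnorm :: "nat \<Rightarrow> (nat \<Rightarrow> real) \<Rightarrow> real" where
  "vnorm k v = sqrt (vinner k v v)"

definition vsub :: "(nat \<Rightarrow> real) \<Rightarrow> (nat \<Rightarrow> real) \<Rightarrow> (nat \<Rightarrow> real)" where
  "vsub u v = (\<lambda>j. u j - v j)"

definition vconvex :: "(nat \<Rightarrow> real) set \<Rightarrow> bool" where
  "vconvex C \<longleftrightarrow> (\<forall>u\<in>C. \<forall>w\<in>C. \<forall>a::real. 0 \<le> a \<and> a \<le> 1 \<longrightarrow>
                      (\<lambda>j. (1 - a) * u j + a * w j) \<in> C)"

definition vclosed :: "nat \<Rightarrow> (nat \<Rightarrow> real) set \<Rightarrow> bool" where
  "vclosed k C \<longleftrightarrow> (\<forall>s u. (\<forall>t. s t \<in> C) \<longrightarrow> u \<in> Rk k \<longrightarrow>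
       (\<lambda>t. vnorm k (vsub (s t) u)) \<longlonglongrightarrow> 0 \<longrightarrow> u \<in> C)"

definition vproj :: "nat \<Rightarrow> (nat \<Rightarrow> real) set \<Rightarrow> (nat \<Rightarrow> real) \<Rightarrow> (nat \<Rightarrow> real)" where
  "vproj k C z = (THE p. p \<in> C \<and> (\<forall>q\<in>C. vnorm k (vsub z p) \<le> vnorm k (vsub z q)))"

definition supp :: "nat \<Rightarrow> (nat \<Rightarrow> real) set \<Rightarrow> (nat \<Rightarrow> real) \<Rightarrow> ereal" where
  "supp k C y = (SUP u\<in>C. ereal (vinner k y u))"

definition mv :: "nat \<Rightarrow> nat \<Rightarrow> (nat \<Rightarrow> nat \<Rightarrow> real) \<Rightarrow> (nat \<Rightarrow> real) \<Rightarrow> (nat \<Rightarrow> real)" where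
  "mv r c A x = (\<lambda>i. if i < r then (\<Sum>j<c. A i j * x j) else 0)"

definition mtv :: "nat \<Rightarrow> nat \<Rightarrow> (nat \<Rightarrow> nat \<Rightarrow> real) \<Rightarrow> (nat \<Rightarrow> real) \<Rightarrow> (nat \<Rightarrow> real)" where
  "mtv r c A y = (\<lambda>j. if j < c then (\<Sum>i<r. A i j * y i) else 0)"

definition mtm :: "nat \<Rightarrow> nat \<Rightarrow> (nat \<Rightarrow> nat \<Rightarrow> real) \<Rightarrow> (nat \<Rightarrow> nat \<Rightarrow> real)" where
  "mtm r c A = (\<lambda>j k. \<Sum>i<r. A i j * A i k)"

definition lam_max :: "nat \<Rightarrow> (nat \<Rightarrow> nat \<Rightarrow> real) \<Rightarrow> real" where
  "lam_max n M = Max {lam. \<exists>v\<in>Rk n. v \<noteq> (\<lambda>_. 0) \<and> mv n n M v = (\<lambda>j. lam * v j)}"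

text \<open>Block vectors y = (y_1,...,y_l): Y i is the i-th block (i = 1..l), in R^(ms i);
blocks with index outside {1..l} are zero (padding).\<close>
definition BS :: "nat \<Rightarrow> (nat \<Rightarrow> nat) \<Rightarrow> (nat \<Rightarrow> nat \<Rightarrow> real) set" where
  "BS l ms = {Y. (\<forall>i\<in>{1..l}. Y i \<in> Rk (ms i)) \<and> (\<forall>i. i \<notin> {1..l} \<longrightarrow> Y i = (\<lambda>_. 0))}"

definition bsub :: "(nat \<Rightarrow> nat \<Rightarrow> real) \<Rightarrow> (nat \<Rightarrow> nat \<Rightarrow> real) \<Rightarrow> (nat \<Rightarrow> nat \<Rightarrow> real)" where
  "bsub Y Z = (\<lambda>i. vsub (Y i) (Z i))"

definition binner :: "nat \<Rightarrow> (nat \<Rightarrow> nat) \<Rightarrow> (nat \<Rightarrow> nat \<Rightarrow> real) \<Rightarrow> (nat \<Rightarrow> nat \<Rightarrow> real) \<Rightarrow> real" where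
  "binner l ms Y Z = (\<Sum>i=1..l. vinner (ms i) (Y i) (Z i))"

definition bnorm :: "nat \<Rightarrow> (nat \<Rightarrow> nat) \<Rightarrow> (nat \<Rightarrow> nat \<Rightarrow> real) \<Rightarrow> real" where
  "bnorm l ms Y = sqrt (binner l ms Y Y)"

definition AtY :: "nat \<Rightarrow> (nat \<Rightarrow> nat) \<Rightarrow> nat \<Rightarrow> (nat \<Rightarrow> nat \<Rightarrow> nat \<Rightarrow> real)
                   \<Rightarrow> (nat \<Rightarrow> nat \<Rightarrow> real) \<Rightarrow> (nat \<Rightarrow> real)" where
  "AtY l ms n A Y = (\<lambda>c. \<Sum>i=1..l. mtv (ms i) n (A i) (Y i) c)"

definition sigD :: "nat \<Rightarrow> (nat \<Rightarrow> nat) \<Rightarrow> (nat \<Rightarrow> (nat \<Rightarrow> real) set) \<Rightarrow> (nat \<Rightarrow> nat \<Rightarrow> real) \<Rightarrow> ereal" where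
  "sigD l ms C Y = (\<Sum>i=1..l. supp (ms i) (C i) (Y i))"

definition gfun :: "nat \<Rightarrow> (nat \<Rightarrow> nat) \<Rightarrow> nat \<Rightarrow> (nat \<Rightarrow> nat \<Rightarrow> nat \<Rightarrow> real) \<Rightarrow> (nat \<Rightarrow> real)
                    \<Rightarrow> (nat \<Rightarrow> nat \<Rightarrow> real) \<Rightarrow> real" where
  "gfun l ms n A v Y = (1/2) * (vnorm n (vsub (AtY l ms n A Y) v))\<^sup>2 - (1/2) * (vnorm n v)\<^sup>2"

definition gradg :: "nat \<Rightarrow> (nat \<Rightarrow> nat) \<Rightarrow> nat \<Rightarrow> (nat \<Rightarrow> nat \<Rightarrow> nat \<Rightarrow> real) \<Rightarrow> (nat \<Rightarrow> real)
                    \<Rightarrow> nat \<Rightarrow> (nat \<Rightarrow> nat \<Rightarrow> real) \<Rightarrow> (nat \<Rightarrow> real)" where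
  "gradg l ms n A v i Y = mv (ms i) n (A i) (vsub (AtY l ms n A Y) v)"

definition dfun :: "nat \<Rightarrow> (nat \<Rightarrow> nat) \<Rightarrow> nat \<Rightarrow> (nat \<Rightarrow> nat \<Rightarrow> nat \<Rightarrow> real) \<Rightarrow> (nat \<Rightarrow> real)
                    \<Rightarrow> (nat \<Rightarrow> (nat \<Rightarrow> real) set) \<Rightarrow> (nat \<Rightarrow> nat \<Rightarrow> real) \<Rightarrow> ereal" where
  "dfun l ms n A v C Y = ereal (gfun l ms n A v Y) + sigD l ms C Y"

definition subdiff :: "nat \<Rightarrow> (nat \<Rightarrow> nat) \<Rightarrow> ((nat \<Rightarrow> nat \<Rightarrow> real) \<Rightarrow> ereal)
                      \<Rightarrow> (nat \<Rightarrow> nat \<Rightarrow> real) \<Rightarrow> (nat \<Rightarrow> nat \<Rightarrow> real) set" where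
  "subdiff l ms f Y = {S \<in> BS l ms. \<bar>f Y\<bar> \<noteq> \<infinity> \<and>
       (\<forall>Z\<in>BS l ms. f Y + ereal (binner l ms S (bsub Z Y)) \<le> f Z)}"

text \<open>dist(0, S) = inf over s in S of ||s|| (= +infinity for empty S).\<close>
definition dist0 :: "nat \<Rightarrow> (nat \<Rightarrow> nat) \<Rightarrow> (nat \<Rightarrow> nat \<Rightarrow> real) set \<Rightarrow> ereal" where
  "dist0 l ms S = (INF s\<in>S. ereal (bnorm l ms s))"

definition mixb :: "(nat \<Rightarrow> nat \<Rightarrow> real) \<Rightarrow> (nat \<Rightarrow> nat \<Rightarrow> real) \<Rightarrow> nat \<Rightarrow> (nat \<Rightarrow> nat \<Rightarrow> real)" where
  "mixb Y' Y i = (\<lambda>k. if k \<le> i then Y' k else Y k)"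

end

theory Submission
  imports Defs "Jordan_Normal_Form.Char_Poly"
begin

lemma Rk_zero: "v \<in> Rk k \<Longrightarrow> \<not> j < k \<Longrightarrow> v j = 0"
  unfolding Rk_def by simp

lemma vinner_sym: "vinner k u v = vinner k v u"
  unfolding vinner_def by (simp add: mult.commute)

lemma vinner_nonneg: "0 \<le> vinner k v v"
  unfolding vinner_def by (simp add: sum_nonneg)

lemma vnorm_nonneg: "0 \<le> vnorm k v"
  unfolding vnorm_def using vinner_nonneg by simp

lemma vnorm_sq: "(vnorm k v)\<^sup>2 = vinner k v v"
  unfolding vnorm_def using vinner_nonneg by simp

lemma coord_sq_le: "j < k \<Longrightarrow> v j * v j \<le> vinner k v v"
  unfolding vinner_def by (rule member_le_sum) auto

lemma coord_le_vnorm: assumes "j < k" shows "\<bar>v j\<bar> \<le> vnorm k v"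
proof -
  have "\<bar>v j\<bar> = sqrt (v j * v j)" by simp
  also have "\<dots> \<le> sqrt (vinner k v v)" using coord_sq_le[OF assms] by (rule real_sqrt_le_mono)
  finally show ?thesis unfolding vnorm_def .
qed

lemma vinner_zero_coord: assumes "vinner k v v = 0" "j < k" shows "v j = 0"
proof -
  have "v j * v j \<le> 0" using coord_sq_le[OF assms(2), of v] assms(1) by simp
  then have "v j * v j = 0" using zero_le_square[of "v j"] by linarith
  then show ?thesis by simp
qed

lemma vinner_vanish: "(\<And>j. j < k \<Longrightarrow> u j = 0) \<Longrightarrow> vinner k u v = 0"
  unfolding vinner_def by simp

lemma vinner_add_left: "vinner k (\<lambda>j. u j + w j) v = vinner k u v + vinner k w v"
  unfolding vinner_def by (simp add: distrib_right sum.distrib)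
lemma vinner_diff_left: "vinner k (\<lambda>j. u j - w j) v = vinner k u v - vinner k w v"
  unfolding vinner_def by (simp add: left_diff_distrib sum_subtractf)
lemma vinner_scale_left: "vinner k (\<lambda>j. a * u j) v = a * vinner k u v"
  unfolding vinner_def by (simp add: sum_distrib_left mult.assoc)
lemma vinner_add_right: "vinner k v (\<lambda>j. u j + w j) = vinner k v u + vinner k v w"
  unfolding vinner_def by (simp add: distrib_left sum.distrib)
lemma vinner_diff_right: "vinner k v (\<lambda>j. u j - w j) = vinner k v u - vinner k v w"
  unfolding vinner_def by (simp add: right_diff_distrib sum_subtractf)
lemma vinner_scale_right: "vinner k v (\<lambda>j. a * u j) = a * vinner k v u"
  unfolding vinner_def by (simp add: sum_distrib_left ac_simps)

lemmas vinner_lin = vinner_add_left vinner_diff_left vinner_scale_left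
  vinner_add_right vinner_diff_right vinner_scale_right

lemma vinner_expand_diff:
  "vinner k (\<lambda>j. u j - w j) (\<lambda>j. u j - w j) = vinner k u u - 2 * vinner k u w + vinner k w w"
  by (simp add: vinner_lin vinner_sym[of k w u])

lemma vinner_expand_add:
  "vinner k (\<lambda>j. u j + w j) (\<lambda>j. u j + w j) = vinner k u u + 2 * vinner k u w + vinner k w w"
  by (simp add: vinner_lin vinner_sym[of k w u])

lemma vinner_cong: "(\<And>j. j < k \<Longrightarrow> u j = u' j) \<Longrightarrow> (\<And>j. j < k \<Longrightarrow> v j = v' j)
   \<Longrightarrow> vinner k u v = vinner k u' v'"
  unfolding vinner_def by simp

lemma mv_Rk: "mv r c M x \<in> Rk r"
  unfolding Rk_def mv_def by simp
lemma mtv_Rk: "mtv r c M y \<in> Rk c"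
  unfolding Rk_def mtv_def by simp

lemma mv_add: "mv r c M (\<lambda>j. u j + w j) = (\<lambda>i. mv r c M u i + mv r c M w i)"
  unfolding mv_def by (auto simp: distrib_left sum.distrib)
lemma mv_diff: "mv r c M (\<lambda>j. u j - w j) = (\<lambda>i. mv r c M u i - mv r c M w i)"
  unfolding mv_def by (auto simp: right_diff_distrib sum_subtractf)
lemma mv_scale: "mv r c M (\<lambda>j. a * u j) = (\<lambda>i. a * mv r c M u i)"
  unfolding mv_def by (auto simp: sum_distrib_left ac_simps)
lemma mv_neg: "mv r c M (\<lambda>j. - u j) = (\<lambda>i. - mv r c M u i)"
  unfolding mv_def by (auto simp: sum_negf)
lemma mv_zero: "mv r c M (\<lambda>j. 0) = (\<lambda>i. 0)"
  unfolding mv_def by auto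
lemma mtv_add: "mtv r c M (\<lambda>j. u j + w j) = (\<lambda>i. mtv r c M u i + mtv r c M w i)"
  unfolding mtv_def by (auto simp: distrib_left sum.distrib)
lemma mtv_diff: "mtv r c M (\<lambda>j. u j - w j) = (\<lambda>i. mtv r c M u i - mtv r c M w i)"
  unfolding mtv_def by (auto simp: right_diff_distrib sum_subtractf)
lemma mtv_scale: "mtv r c M (\<lambda>j. a * u j) = (\<lambda>i. a * mtv r c M u i)"
  unfolding mtv_def by (auto simp: sum_distrib_left ac_simps)
lemma mtv_zero: "mtv r c M (\<lambda>j. 0) = (\<lambda>i. 0)"
  unfolding mtv_def by auto

lemma mv_cong: "(\<And>j. j < c \<Longrightarrow> x j = x' j) \<Longrightarrow> mv r c M x = mv r c M x'"
  unfolding mv_def by auto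
lemma mtv_cong: "(\<And>j. j < r \<Longrightarrow> x j = x' j) \<Longrightarrow> mtv r c M x = mtv r c M x'"
  unfolding mtv_def by auto

lemma adjoint: "vinner r (mv r c M x) y = vinner c x (mtv r c M y)"
proof -
  have "vinner r (mv r c M x) y = (\<Sum>i<r. \<Sum>j<c. M i j * x j * y i)"
    unfolding vinner_def mv_def by (simp add: sum_distrib_right)
  also have "\<dots> = (\<Sum>j<c. \<Sum>i<r. M i j * x j * y i)" by (rule sum.swap)
  also have "\<dots> = vinner c x (mtv r c M y)"
    unfolding vinner_def mtv_def by (simp add: sum_distrib_left ac_simps)
  finally show ?thesis .
qed

lemma mtm_mv: "mv n n (mtm m n A) u = mtv m n A (mv m n A u)"
proof (rule ext)
  fix j
  show "mv n n (mtm m n A) u j = mtv m n A (mv m n A u) j"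
  proof (cases "j < n")
    case True
    have "mv n n (mtm m n A) u j = (\<Sum>k<n. \<Sum>i<m. A i j * A i k * u k)"
      using True unfolding mv_def mtm_def by (simp add: sum_distrib_right)
    also have "\<dots> = (\<Sum>i<m. \<Sum>k<n. A i j * A i k * u k)" by (rule sum.swap)
    also have "\<dots> = mtv m n A (mv m n A u) j"
      using True unfolding mtv_def mv_def by (simp add: sum_distrib_left ac_simps)
    finally show ?thesis .
  qed (simp add: mv_def mtv_def)
qed

lemma Q_mtm: "vinner n u (mv n n (mtm m n A) u) = vinner m (mv m n A u) (mv m n A u)"
  by (simp add: mtm_mv adjoint)

section \<open>Convergence\<close>

lemma tendsto_mv: assumes "\<And>j. (\<lambda>t. f t j) \<longlonglongrightarrow> g j"
  shows "(\<lambda>t. mv r c M (f t) i) \<longlonglongrightarrow> mv r c M g i"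
proof (cases "i < r")
  case True then show ?thesis unfolding mv_def by (simp, intro tendsto_sum tendsto_mult_left assms)
next
  case False then show ?thesis unfolding mv_def by simp
qed

lemma tendsto_mtv: assumes "\<And>j. (\<lambda>t. f t j) \<longlonglongrightarrow> g j"
  shows "(\<lambda>t. mtv r c M (f t) i) \<longlonglongrightarrow> mtv r c M g i"
proof (cases "i < c")
  case True then show ?thesis unfolding mtv_def by (simp, intro tendsto_sum tendsto_mult_left assms)
next
  case False then show ?thesis unfolding mtv_def by simp
qed

lemma tendsto_AtY: assumes "\<And>i j. (\<lambda>t. W t i j) \<longlonglongrightarrow> W0 i j"
  shows "(\<lambda>t. AtY l ms n A (W t) c) \<longlonglongrightarrow> AtY l ms n A W0 c"
  unfolding AtY_def by (intro tendsto_sum tendsto_mtv assms)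

lemma tendsto_vinner: assumes "\<And>j. (\<lambda>t. f t j) \<longlonglongrightarrow> g j" "\<And>j. (\<lambda>t. f' t j) \<longlonglongrightarrow> g' j"
  shows "(\<lambda>t. vinner k (f t) (f' t)) \<longlonglongrightarrow> vinner k g g'"
  unfolding vinner_def by (intro tendsto_sum tendsto_mult assms)

lemma tendsto_vnorm: assumes "\<And>j. (\<lambda>t. f t j) \<longlonglongrightarrow> g j"
  shows "(\<lambda>t. vnorm k (f t)) \<longlonglongrightarrow> vnorm k g"
  unfolding vnorm_def by (intro tendsto_real_sqrt tendsto_vinner assms)

lemma tendsto_vnorm_sub: assumes "\<And>j. j < k \<Longrightarrow> (\<lambda>t. f t j) \<longlonglongrightarrow> g j"
  shows "(\<lambda>t. vnorm k (vsub (f t) g)) \<longlonglongrightarrow> 0"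
proof -
  have h: "\<And>j. j \<in> {..<k} \<Longrightarrow> (\<lambda>t. f t j) \<longlonglongrightarrow> g j" using assms by simp
  have "(\<lambda>t. \<Sum>j<k. (f t j - g j) * (f t j - g j)) \<longlonglongrightarrow> (\<Sum>j<k. (g j - g j) * (g j - g j))"
    by (intro tendsto_sum tendsto_mult tendsto_diff tendsto_const h)
  then have "(\<lambda>t. sqrt (\<Sum>j<k. (f t j - g j) * (f t j - g j))) \<longlonglongrightarrow> sqrt 0"
    by (intro tendsto_real_sqrt) simp
  then show ?thesis unfolding vnorm_def vinner_def vsub_def by simp
qed

lemma tendsto_bnorm0: assumes "\<And>i k. (\<lambda>t. F t i k) \<longlonglongrightarrow> 0"
  shows "(\<lambda>t. bnorm l ms (F t)) \<longlonglongrightarrow> 0"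
proof -
  have "(\<lambda>t. \<Sum>i=1..l. \<Sum>k<ms i. F t i k * F t i k) \<longlonglongrightarrow> (\<Sum>i=1..l. \<Sum>k<ms i. (0::real) * 0)"
    by (intro tendsto_sum tendsto_mult assms)
  then have "(\<lambda>t. sqrt (\<Sum>i=1..l. \<Sum>k<ms i. F t i k * F t i k)) \<longlonglongrightarrow> sqrt 0"
    by (intro tendsto_real_sqrt) simp
  then show ?thesis unfolding bnorm_def binner_def vinner_def by simp
qed

lemma tendsto_abs_le0: fixes f g :: "nat \<Rightarrow> real"
  assumes "\<And>t. \<bar>f t\<bar> \<le> g t" "g \<longlonglongrightarrow> 0" shows "f \<longlonglongrightarrow> 0"
proof -
  have l1: "(\<lambda>t. - g t) \<longlonglongrightarrow> 0" using tendsto_minus[OF assms(2)] by simp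
  have "- g t \<le> f t" "f t \<le> g t" for t
    using assms(1)[of t] by (simp_all add: abs_le_iff)
  then have e1: "\<forall>\<^sub>F t in sequentially. - g t \<le> f t" and e2: "\<forall>\<^sub>F t in sequentially. f t \<le> g t"
    by (auto intro: always_eventually)
  show ?thesis by (rule tendsto_sandwich[OF e1 e2 l1 assms(2)])
qed

section \<open>Bolzano-Weierstrass\<close>

lemma bw_real: fixes s :: "nat \<Rightarrow> real" assumes "\<And>t. \<bar>s t\<bar> \<le> B"
  shows "\<exists>r a. strict_mono r \<and> (\<lambda>t. s (r t)) \<longlonglongrightarrow> a"
proof -
  obtain r where r: "strict_mono r" "monoseq (\<lambda>t. s (r t))" using seq_monosub by blast
  have "Bseq (\<lambda>t. s (r t))" using assms by (intro BseqI'[of _ B]) auto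
  then have "convergent (\<lambda>t. s (r t))" using r(2) Bseq_monoseq_convergent by blast
  then show ?thesis using r(1) unfolding convergent_def by blast
qed

lemma bw_coords: fixes s :: "nat \<Rightarrow> nat \<Rightarrow> real" assumes "\<And>t j. \<bar>s t j\<bar> \<le> B"
  shows "\<exists>r u. strict_mono r \<and> (\<forall>j<p. (\<lambda>t. s (r t) j) \<longlonglongrightarrow> u j)"
proof (induction p)
  case 0
  show ?case by (intro exI[of _ id]) (auto simp: strict_mono_def)
next
  case (Suc p)
  then obtain r u where r: "strict_mono r" and u: "\<forall>j<p. (\<lambda>t. s (r t) j) \<longlonglongrightarrow> u j" by blast
  obtain r' a where r': "strict_mono r'" and a: "(\<lambda>t. s (r (r' t)) p) \<longlonglongrightarrow> a"
    using bw_real[of "\<lambda>t. s (r t) p" B] assms by blast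
  have "\<forall>j<Suc p. (\<lambda>t. s ((r \<circ> r') t) j) \<longlonglongrightarrow> (u(p:=a)) j"
  proof (intro allI impI)
    fix j assume j: "j < Suc p"
    show "(\<lambda>t. s ((r \<circ> r') t) j) \<longlonglongrightarrow> (u(p:=a)) j"
    proof (cases "j = p")
      case True then show ?thesis using a by simp
    next
      case False then have "j < p" using j by simp
      from LIMSEQ_subseq_LIMSEQ[OF u[rule_format, OF this] r'] show ?thesis using False
        by (simp add: o_def)
    qed
  qed
  moreover have "strict_mono (r \<circ> r')" using r r' by (rule strict_mono_o)
  ultimately show ?case by blast
qed

lemma bw_Rk: fixes s :: "nat \<Rightarrow> nat \<Rightarrow> real"
  assumes "\<And>t. s t \<in> Rk k" "\<And>t j. \<bar>s t j\<bar> \<le> B"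
  shows "\<exists>r u. strict_mono r \<and> u \<in> Rk k \<and> (\<forall>j. (\<lambda>t. s (r t) j) \<longlonglongrightarrow> u j)"
proof -
  obtain r u where r: "strict_mono r" and u: "\<forall>j<k. (\<lambda>t. s (r t) j) \<longlonglongrightarrow> u j"
    using bw_coords[of s B k] assms(2) by blast
  define u' where "u' = (\<lambda>j. if j < k then u j else 0)"
  have "u' \<in> Rk k" unfolding u'_def Rk_def by simp
  moreover have "\<forall>j. (\<lambda>t. s (r t) j) \<longlonglongrightarrow> u' j"
  proof
    fix j show "(\<lambda>t. s (r t) j) \<longlonglongrightarrow> u' j"
    proof (cases "j < k")
      case True then show ?thesis using u u'_def by simp
    next
      case False
      then have "\<And>t. s (r t) j = 0" using assms(1) unfolding Rk_def by auto
      then show ?thesis using False u'_def by simp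
    qed
  qed
  ultimately show ?thesis using r by blast
qed

section \<open>Projection\<close>


lemma vnorm_le_iff: "vnorm k a \<le> vnorm k b \<longleftrightarrow> vinner k a a \<le> vinner k b b"
  unfolding vnorm_def by simp

lemma proj_exists:
  assumes ne: "C \<noteq> {}" and sub: "C \<subseteq> Rk k" and cl: "vclosed k C"
  shows "\<exists>p\<in>C. \<forall>q\<in>C. vnorm k (vsub z p) \<le> vnorm k (vsub z q)"
proof -
  let ?D = "(\<lambda>p. vnorm k (vsub z p)) ` C"
  define \<delta> where "\<delta> = Inf ?D"
  have bdd: "bdd_below ?D" by (rule bdd_belowI[of _ 0]) (auto simp: vnorm_nonneg)
  have le: "\<And>q. q\<in>C \<Longrightarrow> \<delta> \<le> vnorm k (vsub z q)" unfolding \<delta>_def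
    by (rule cInf_lower) (use bdd in auto)
  have d0: "0 \<le> \<delta>" unfolding \<delta>_def using ne by (intro cInf_greatest) (auto simp: vnorm_nonneg)
  have "\<forall>t. \<exists>p\<in>C. vnorm k (vsub z p) < \<delta> + inverse (real (Suc t))"
  proof
    fix t
    have "Inf ?D < \<delta> + inverse (real (Suc t))" unfolding \<delta>_def by simp
    then show "\<exists>p\<in>C. vnorm k (vsub z p) < \<delta> + inverse (real (Suc t))"
      using cInf_less_iff[of ?D] ne bdd by auto
  qed
  then obtain s where sC: "\<And>t. s t \<in> C" and sd: "\<And>t. vnorm k (vsub z (s t)) < \<delta> + inverse (real (Suc t))"
    by metis
  define Zb where "Zb = (\<Sum>j<k. \<bar>z j\<bar>)"
  have Zb0: "0 \<le> Zb" unfolding Zb_def by (simp add: sum_nonneg)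
  have bnd: "\<bar>s t j\<bar> \<le> Zb + \<delta> + 1" for t j
  proof (cases "j < k")
    case True
    have "\<bar>z j\<bar> \<le> Zb" unfolding Zb_def using True by (intro member_le_sum) auto
    moreover have "\<bar>z j - s t j\<bar> \<le> vnorm k (vsub z (s t))"
      using coord_le_vnorm[OF True, of "vsub z (s t)"] by (simp add: vsub_def)
    moreover have "inverse (real (Suc t)) \<le> 1"
    proof -
      have "inverse (real (Suc t)) \<le> inverse 1" by (rule le_imp_inverse_le) auto
      then show ?thesis by simp
    qed
    ultimately show ?thesis using sd[of t] by linarith
  next
    case False
    then have "s t j = 0" using Rk_zero[of "s t" k j] sC sub by blast
    then show ?thesis using Zb0 d0 by simp
  qed
  have sRk: "\<And>t. s t \<in> Rk k" using sC sub by auto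
  obtain r u where r: "strict_mono r" and uRk: "u \<in> Rk k" and cv: "\<forall>j. (\<lambda>t. s (r t) j) \<longlonglongrightarrow> u j"
    using bw_Rk[of s k "Zb + \<delta> + 1"] sRk bnd by blast
  have "u \<in> C"
    using cl unfolding vclosed_def
  proof (elim allE impE)
    show "\<forall>t. (s \<circ> r) t \<in> C" using sC by simp
    show "u \<in> Rk k" by fact
    show "(\<lambda>t. vnorm k (vsub ((s \<circ> r) t) u)) \<longlonglongrightarrow> 0"
      using cv by (intro tendsto_vnorm_sub) auto
  qed
  have lim1: "(\<lambda>t. vnorm k (vsub z (s (r t)))) \<longlonglongrightarrow> vnorm k (vsub z u)"
    unfolding vsub_def using cv by (intro tendsto_vnorm tendsto_diff) auto
  have lim2: "(\<lambda>t. \<delta> + inverse (real (Suc t))) \<longlonglongrightarrow> \<delta> + 0"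
    by (intro tendsto_add tendsto_const LIMSEQ_inverse_real_of_nat)
  have "vnorm k (vsub z u) \<le> \<delta>"
  proof (rule LIMSEQ_le[OF lim1, of _ \<delta>])
    show "(\<lambda>t. \<delta> + inverse (real (Suc t))) \<longlonglongrightarrow> \<delta>" using lim2 by simp
    have "\<And>t. vnorm k (vsub z (s (r t))) \<le> \<delta> + inverse (real (Suc t))"
    proof -
      fix t
      have "t \<le> r t" using r by (rule seq_suble)
      then have "inverse (real (Suc (r t))) \<le> inverse (real (Suc t))"
        by (intro le_imp_inverse_le) auto
      then show "vnorm k (vsub z (s (r t))) \<le> \<delta> + inverse (real (Suc t))" using sd[of "r t"] by linarith
    qed
    then show "\<exists>N. \<forall>n\<ge>N. vnorm k (vsub z (s (r n))) \<le> \<delta> + inverse (real (Suc n))" by blast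
  qed
  then show ?thesis using \<open>u \<in> C\<close> le by (meson order_trans)
qed


lemma parallelogram:
  "vinner k (vsub z (\<lambda>j. (1 - 1/2) * p j + 1/2 * p' j)) (vsub z (\<lambda>j. (1 - 1/2) * p j + 1/2 * p' j))
   = 1/2 * vinner k (vsub z p) (vsub z p) + 1/2 * vinner k (vsub z p') (vsub z p')
     - 1/4 * vinner k (vsub p p') (vsub p p')"
  unfolding vinner_def vsub_def
  apply (simp only: sum_distrib_left flip: sum.distrib sum_subtractf)
  apply (rule sum.cong, rule refl)
  apply (simp add: algebra_simps)
  done

lemma segment_expand:
  "vinner k (vsub z (\<lambda>j. (1 - a) * p j + a * q j)) (vsub z (\<lambda>j. (1 - a) * p j + a * q j))
   = vinner k (vsub z p) (vsub z p) - 2 * a * vinner k (vsub z p) (vsub q p)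
     + a^2 * vinner k (vsub q p) (vsub q p)"
  unfolding vinner_def vsub_def
  apply (simp only: sum_distrib_left flip: sum.distrib sum_subtractf)
  apply (rule sum.cong, rule refl)
  apply (simp add: algebra_simps power2_eq_square)
  done

lemma proj_char:
  assumes ne: "C \<noteq> {}" and sub: "C \<subseteq> Rk k" and cl: "vclosed k C" and cv: "vconvex C"
  shows "vproj k C z \<in> C \<and> (\<forall>q\<in>C. vinner k (vsub z (vproj k C z)) (vsub q (vproj k C z)) \<le> 0)"
proof -
  obtain p where pC: "p \<in> C" and pm: "\<forall>q\<in>C. vnorm k (vsub z p) \<le> vnorm k (vsub z q)"
    using proj_exists[OF ne sub cl] by blast
  have uniq: "p' = p" if p'C: "p' \<in> C" and p'm: "\<forall>q\<in>C. vnorm k (vsub z p') \<le> vnorm k (vsub z q)" for p'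
  proof -
    have e1: "vinner k (vsub z p) (vsub z p) \<le> vinner k (vsub z p') (vsub z p')"
      using pm p'C vnorm_le_iff by blast
    have e2: "vinner k (vsub z p') (vsub z p') \<le> vinner k (vsub z p) (vsub z p)"
      using p'm pC vnorm_le_iff by blast
    have mC: "(\<lambda>j. (1 - 1/2) * p j + 1/2 * p' j) \<in> C"
      using cv[unfolded vconvex_def, rule_format, OF pC p'C, of "1/2"] by simp
    have "vinner k (vsub z p) (vsub z p) \<le>
       vinner k (vsub z (\<lambda>j. (1 - 1/2) * p j + 1/2 * p' j)) (vsub z (\<lambda>j. (1 - 1/2) * p j + 1/2 * p' j))"
      using pm mC vnorm_le_iff by blast
    then have "vinner k (vsub p p') (vsub p p') \<le> 0"
      unfolding parallelogram using e1 e2 by linarith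
    then have z: "vinner k (vsub p p') (vsub p p') = 0" using vinner_nonneg by (metis order_antisym)
    show "p' = p"
    proof (rule ext)
      fix j show "p' j = p j"
      proof (cases "j < k")
        case True then show ?thesis using vinner_zero_coord[OF z True] by (simp add: vsub_def)
      next
        case False
        have "p \<in> Rk k" "p' \<in> Rk k" using pC p'C sub by auto
        then show ?thesis using Rk_zero[of p k j] Rk_zero[of p' k j] False by simp
      qed
    qed
  qed
  have vp: "vproj k C z = p" unfolding vproj_def
  proof (rule the_equality)
    show "p \<in> C \<and> (\<forall>q\<in>C. vnorm k (vsub z p) \<le> vnorm k (vsub z q))" using pC pm by blast
    fix p' assume "p' \<in> C \<and> (\<forall>q\<in>C. vnorm k (vsub z p') \<le> vnorm k (vsub z q))"
    then show "p' = p" using uniq by blast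
  qed
  have var: "vinner k (vsub z p) (vsub q p) \<le> 0" if qC: "q \<in> C" for q
  proof (rule ccontr)
    define X where "X = vinner k (vsub z p) (vsub q p)"
    define N where "N = vinner k (vsub q p) (vsub q p)"
    assume "\<not> vinner k (vsub z p) (vsub q p) \<le> 0"
    then have X0: "X > 0" unfolding X_def by simp
    have N0: "N \<ge> 0" unfolding N_def by (rule vinner_nonneg)
    define a where "a = min 1 (X / (N + 1))"
    have a0: "0 < a" and a1: "a \<le> 1" unfolding a_def using X0 N0 by auto
    have maC: "(\<lambda>j. (1 - a) * p j + a * q j) \<in> C" using cv[unfolded vconvex_def, rule_format, OF pC qC, of a] a0 a1 by simp
    have "vinner k (vsub z p) (vsub z p) \<le>
        vinner k (vsub z (\<lambda>j. (1 - a) * p j + a * q j)) (vsub z (\<lambda>j. (1 - a) * p j + a * q j))"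
      using pm maC vnorm_le_iff by blast
    then have "2 * a * X \<le> a^2 * N" unfolding segment_expand X_def N_def by linarith
    moreover have "a * (2 * X) = 2 * a * X" by simp
    moreover have "a * (a * N) = a^2 * N" by (simp add: power2_eq_square)
    ultimately have "a * (2 * X) \<le> a * (a * N)" by linarith
    then have "2 * X \<le> a * N" using mult_left_le_imp_le[OF _ a0] by blast
    moreover have "a * N \<le> X / (N + 1) * N" unfolding a_def using N0 by (intro mult_right_mono) auto
    moreover have "X / (N + 1) * N < X"
    proof -
      have "N / (N + 1) < 1" using N0 by simp
      then have "X * (N / (N + 1)) < X * 1" using X0 by (intro mult_strict_left_mono)
      then show ?thesis by simp
    qed
    ultimately show False using X0 by linarith
  qed
  show ?thesis using vp pC var by simp
qed

section \<open>Eigenvalues\<close>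

lemma eig_finite: "finite {lam. \<exists>v\<in>Rk n. v \<noteq> (\<lambda>_. 0) \<and> mv n n M v = (\<lambda>j. lam * v j)}"
proof -
  define MM where "MM = mat n n (\<lambda>(i,j). M i j)"
  have MMc: "MM \<in> carrier_mat n n" unfolding MM_def by simp
  have "char_poly MM \<noteq> 0" using degree_monic_char_poly[OF MMc] by auto
  then have fin: "finite {k. poly (char_poly MM) k = 0}" by (rule poly_roots_finite)
  have "{lam. \<exists>v\<in>Rk n. v \<noteq> (\<lambda>_. 0) \<and> mv n n M v = (\<lambda>j. lam * v j)} \<subseteq> {k. poly (char_poly MM) k = 0}"
  proof
    fix lam assume "lam \<in> {lam. \<exists>v\<in>Rk n. v \<noteq> (\<lambda>_. 0) \<and> mv n n M v = (\<lambda>j. lam * v j)}"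
    then obtain v where v: "v \<in> Rk n" "v \<noteq> (\<lambda>_. 0)" "mv n n M v = (\<lambda>j. lam * v j)" by blast
    from v(2) obtain j where vj: "v j \<noteq> 0" by auto
    have jn: "j < n" using Rk_zero[OF v(1), of j] vj by blast
    define V where "V = vec n v"
    have "eigenvector MM V lam" unfolding eigenvector_def
    proof (intro conjI)
      show "V \<in> carrier_vec (dim_row MM)" using MMc V_def by simp
      show "V \<noteq> 0\<^sub>v (dim_row MM)"
      proof
        assume "V = 0\<^sub>v (dim_row MM)"
        then have "V $ j = 0" using jn MMc by simp
        then show False using vj jn V_def by simp
      qed
      show "MM *\<^sub>v V = lam \<cdot>\<^sub>v V"
      proof (rule eq_vecI)
        fix i assume "i < dim_vec (lam \<cdot>\<^sub>v V)"
        then have i: "i < n" by (simp add: V_def)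
        have "(MM *\<^sub>v V) $ i = (\<Sum>j\<in>{0..<n}. M i j * v j)"
          using i by (simp add: MM_def V_def scalar_prod_def row_def)
        also have "\<dots> = mv n n M v i" using i by (simp add: mv_def atLeast0LessThan)
        also have "\<dots> = lam * v i" using v(3) by (metis)
        finally show "(MM *\<^sub>v V) $ i = (lam \<cdot>\<^sub>v V) $ i" using i by (simp add: V_def)
      qed (simp add: MM_def V_def)
    qed
    then have "eigenvalue MM lam" unfolding eigenvalue_def by blast
    then show "lam \<in> {k. poly (char_poly MM) k = 0}" using eigenvalue_root_char_poly[OF MMc] by simp
  qed
  then show ?thesis using fin finite_subset by blast
qed

lemma sym_mv: assumes "\<And>i j. M i j = M j i"
  shows "vinner n w (mv n n M u) = vinner n u (mv n n M w)"
proof -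
  have "vinner n w (mv n n M u) = vinner n u (mtv n n M w)"
    using adjoint[of n n M u w] vinner_sym by metis
  also have "mtv n n M w = mv n n M w" unfolding mtv_def mv_def using assms by auto
  finally show ?thesis .
qed

lemma quad_zero: fixes a b :: real
  assumes b: "b \<le> 0" and h: "\<And>s. 2 * s * a + s^2 * b \<le> 0"
  shows "a = 0"
proof -
  have pos: "1 - b > 0" using b by simp
  define t where "t = 1 / (1 - b)"
  have t0: "t > 0" unfolding t_def using pos by simp
  have "t * (1 - b) = 1" unfolding t_def using pos by simp
  then have tb: "t * b = t - 1" by (simp add: algebra_simps)
  have p: "t * (2 + t * b) > 0" using t0 tb by simp
  have "2 * (a * t) * a + (a * t)^2 * b = a^2 * (t * (2 + t * b))"
    by (simp add: power2_eq_square algebra_simps)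
  then have "a^2 * (t * (2 + t * b)) \<le> 0" using h[of "a * t"] by simp
  then have "a^2 \<le> 0" using mult_le_0_iff[of "a^2" "t * (2 + t * b)"] p by auto
  then show ?thesis by simp
qed

lemma unit_inner: assumes "c < n"
  shows "vinner n (\<lambda>j. if j = c then 1 else 0) (\<lambda>j. if j = c then 1 else 0) = 1"
proof -
  have "(\<Sum>j<n. (if j = c then 1 else 0) * (if j = c then 1 else (0::real))) = (\<Sum>j<n. if j = c then 1 else 0)"
    by (rule sum.cong) auto
  also have "\<dots> = 1" using assms by simp
  finally show ?thesis unfolding vinner_def .
qed

lemma unit_Q: assumes "c < n"
  shows "vinner n (\<lambda>j. if j = c then 1 else 0) (mv n n M (\<lambda>j. if j = c then 1 else 0)) = M c c"
proof -
  have h: "\<And>j. (\<Sum>k<n. M j k * (if k = c then 1 else 0)) = M j c"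
  proof -
    fix j
    have "(\<Sum>k<n. M j k * (if k = c then 1 else 0)) = (\<Sum>k<n. if k = c then M j k else 0)"
      by (rule sum.cong) auto
    then show "(\<Sum>k<n. M j k * (if k = c then 1 else 0)) = M j c" using assms by simp
  qed
  have "mv n n M (\<lambda>j. if j = c then 1 else 0) = (\<lambda>j. if j < n then M j c else 0)"
    unfolding mv_def by (rule ext, simp only: h)
  moreover have "(\<Sum>j<n. (if j = c then 1 else 0) * (if j < n then M j c else 0)) = (\<Sum>j<n. if j = c then M c c else 0)"
    using assms by (intro sum.cong) auto
  ultimately show ?thesis unfolding vinner_def using assms by simp
qed

lemma rayleigh:
  fixes M :: "nat \<Rightarrow> nat \<Rightarrow> real"
  assumes n: "n \<ge> 1" and sym: "\<And>i j. M i j = M j i"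
    and fin: "finite {lam. \<exists>v\<in>Rk n. v \<noteq> (\<lambda>_. 0) \<and> mv n n M v = (\<lambda>j. lam * v j)}"
  shows "\<forall>u\<in>Rk n. vinner n u (mv n n M u) \<le> lam_max n M * vinner n u u"
proof -
  define Q where "Q u = vinner n u (mv n n M u)" for u
  define K where "K = {u \<in> Rk n. vinner n u u = 1}"
  define e0 where "e0 = (\<lambda>j::nat. if j = 0 then (1::real) else 0)"
  have e0K: "e0 \<in> K" unfolding K_def e0_def using n unit_inner[of 0 n] by (auto simp: Rk_def)
  define Bq where "Bq = (\<Sum>j<n. \<Sum>k<n. \<bar>M j k\<bar>)"
  have Qbnd: "Q u \<le> Bq" if uK: "u \<in> K" for u
  proof -
    have u1: "\<bar>u j\<bar> \<le> 1" if "j < n" for j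
    proof -
      have "u j * u j \<le> 1" using coord_sq_le[OF that, of u] uK unfolding K_def by simp
      then show ?thesis by (metis abs_square_le_1 power2_eq_square)
    qed
    have "Q u = (\<Sum>j<n. \<Sum>k<n. u j * M j k * u k)"
      unfolding Q_def vinner_def mv_def by (simp add: sum_distrib_left mult.assoc)
    also have "\<dots> \<le> (\<Sum>j<n. \<Sum>k<n. \<bar>u j * M j k * u k\<bar>)"
      by (intro sum_mono) auto
    also have "\<dots> \<le> Bq" unfolding Bq_def
    proof (intro sum_mono)
      fix j k assume "j \<in> {..<n}" "k \<in> {..<n}"
      then have "\<bar>u j\<bar> * \<bar>M j k\<bar> * \<bar>u k\<bar> \<le> 1 * \<bar>M j k\<bar> * 1"
        using u1 by (intro mult_mono) auto
      then show "\<bar>u j * M j k * u k\<bar> \<le> \<bar>M j k\<bar>" by (simp add: abs_mult)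
    qed
    finally show ?thesis .
  qed
  have bdd: "bdd_above (Q ` K)" using Qbnd by (intro bdd_aboveI2) auto
  have Kne: "Q ` K \<noteq> {}" using e0K by auto
  define mu where "mu = Sup (Q ` K)"
  have Qle: "Q u \<le> mu" if "u \<in> K" for u unfolding mu_def using bdd that by (intro cSup_upper) auto
  have "\<forall>t. \<exists>u\<in>K. mu - inverse (real (Suc t)) < Q u"
  proof
    fix t
    have "mu - inverse (real (Suc t)) < Sup (Q ` K)" unfolding mu_def by simp
    then show "\<exists>u\<in>K. mu - inverse (real (Suc t)) < Q u" using less_cSup_iff[OF Kne bdd] by auto
  qed
  then obtain us where usK: "\<And>t. us t \<in> K" and usQ: "\<And>t. mu - inverse (real (Suc t)) < Q (us t)"
    by metis
  have usRk: "\<And>t. us t \<in> Rk n" using usK unfolding K_def by auto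
  have usb: "\<bar>us t j\<bar> \<le> 1" for t j
  proof (cases "j < n")
    case True
    have "us t j * us t j \<le> 1" using coord_sq_le[OF True, of "us t"] usK[of t] unfolding K_def by simp
    then show ?thesis by (metis abs_square_le_1 power2_eq_square)
  next
    case False then show ?thesis using Rk_zero[OF usRk False] by simp
  qed
  obtain r us0 where r: "strict_mono r" and us0Rk: "us0 \<in> Rk n" and cv: "\<forall>j. (\<lambda>t. us (r t) j) \<longlonglongrightarrow> us0 j"
    using bw_Rk[of us n 1] usRk usb by blast
  have cv': "\<And>j. (\<lambda>t. us (r t) j) \<longlonglongrightarrow> us0 j" using cv by blast
  have "(\<lambda>t. vinner n (us (r t)) (us (r t))) \<longlonglongrightarrow> vinner n us0 us0"
    by (intro tendsto_vinner cv')
  moreover have "(\<lambda>t. vinner n (us (r t)) (us (r t))) = (\<lambda>t. 1)" using usK unfolding K_def by auto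
  ultimately have "vinner n us0 us0 = 1" using LIMSEQ_unique tendsto_const by metis
  then have us0K: "us0 \<in> K" unfolding K_def using us0Rk by simp
  have l1: "(\<lambda>t. Q (us (r t))) \<longlonglongrightarrow> Q us0"
    unfolding Q_def by (intro tendsto_vinner tendsto_mv cv')
  have inv0: "(\<lambda>t. inverse (real (Suc (r t)))) \<longlonglongrightarrow> 0"
    using LIMSEQ_subseq_LIMSEQ[OF LIMSEQ_inverse_real_of_nat r] by (simp add: o_def)
  have l2: "(\<lambda>t. Q (us (r t))) \<longlonglongrightarrow> mu"
  proof (rule tendsto_sandwich[of "\<lambda>t. mu - inverse (real (Suc (r t)))" _ _ "\<lambda>t. mu"])
    show "\<forall>\<^sub>F t in sequentially. mu - inverse (real (Suc (r t))) \<le> Q (us (r t))"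
      using usQ by (intro always_eventually) (auto intro: less_imp_le)
    show "\<forall>\<^sub>F t in sequentially. Q (us (r t)) \<le> mu"
      using Qle usK by (intro always_eventually) auto
    show "(\<lambda>t. mu - inverse (real (Suc (r t)))) \<longlonglongrightarrow> mu"
      using tendsto_diff[OF tendsto_const inv0, of mu] by simp
  qed (rule tendsto_const)
  have Qus0: "Q us0 = mu" using LIMSEQ_unique[OF l1 l2] .
  have bound: "Q u \<le> mu * vinner n u u" if uRk: "u \<in> Rk n" for u
  proof (cases "vinner n u u = 0")
    case True
    then have "Q u = 0" unfolding Q_def by (intro vinner_vanish) (auto intro: vinner_zero_coord)
    then show ?thesis using True by simp
  next
    case False
    define N where "N = vinner n u u"
    have N0: "N > 0" using False vinner_nonneg[of n u] unfolding N_def by linarith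
    define s where "s = inverse (sqrt N)"
    have "s * s = inverse (sqrt N * sqrt N)" unfolding s_def by (rule inverse_mult_distrib[symmetric])
    moreover have "sqrt N * sqrt N = N" using N0 by simp
    ultimately have ss: "s * s = inverse N" by simp
    define u' where "u' = (\<lambda>j. s * u j)"
    have u'Rk: "u' \<in> Rk n" using uRk unfolding u'_def Rk_def by auto
    have "vinner n u' u' = s * s * N" unfolding u'_def N_def by (simp add: vinner_lin mult.assoc)
    then have "vinner n u' u' = 1" using ss N0 by simp
    then have "u' \<in> K" using u'Rk unfolding K_def by simp
    then have "Q u' \<le> mu" by (rule Qle)
    moreover have "Q u' = s * s * Q u" unfolding Q_def u'_def by (simp add: vinner_lin mv_scale mult.assoc)
    ultimately have "inverse N * Q u \<le> mu" using ss by simp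
    then have "N * (inverse N * Q u) \<le> N * mu" using N0 by (intro mult_left_mono) auto
    moreover have "N * (inverse N * Q u) = Q u" using N0 by (simp add: mult.assoc[symmetric])
    ultimately have "Q u \<le> N * mu" by linarith
    then show ?thesis unfolding N_def by (simp add: mult.commute)
  qed
  have eig: "mv n n M us0 = (\<lambda>j. mu * us0 j)"
  proof -
    define w where "w = (\<lambda>j. mv n n M us0 j - mu * us0 j)"
    have wRk: "w \<in> Rk n" using us0Rk mv_Rk[of n n M us0] unfolding w_def Rk_def by auto
    define a where "a = vinner n w (mv n n M us0) - mu * vinner n us0 w"
    define b where "b = Q w - mu * vinner n w w"
    have b0: "b \<le> 0" unfolding b_def using bound[OF wRk] by simp
    have "2 * s * a + s^2 * b \<le> 0" for s
    proof -
      have vRk: "(\<lambda>j. us0 j + s * w j) \<in> Rk n" using us0Rk wRk unfolding Rk_def by auto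
      have e1: "Q (\<lambda>j. us0 j + s * w j) = Q us0 + 2 * s * vinner n w (mv n n M us0) + s^2 * Q w"
        unfolding Q_def using sym_mv[of M n us0 w, OF sym]
        by (simp add: vinner_lin mv_add mv_scale power2_eq_square algebra_simps)
      have e2: "vinner n (\<lambda>j. us0 j + s * w j) (\<lambda>j. us0 j + s * w j)
          = vinner n us0 us0 + 2 * s * vinner n us0 w + s^2 * vinner n w w"
        using vinner_sym[of n w us0] by (simp add: vinner_lin power2_eq_square algebra_simps)
      have "2 * s * a + s^2 * b = Q (\<lambda>j. us0 j + s * w j) - mu * vinner n (\<lambda>j. us0 j + s * w j) (\<lambda>j. us0 j + s * w j)"
        unfolding e1 e2 a_def b_def using Qus0 \<open>vinner n us0 us0 = 1\<close> by (simp add: algebra_simps)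
      also have "\<dots> \<le> 0" using bound[OF vRk] by simp
      finally show ?thesis .
    qed
    then have a0: "a = 0" using quad_zero[OF b0] by blast
    have "a = vinner n w w" unfolding a_def w_def
      using vinner_sym[of n us0 "\<lambda>j. mv n n M us0 j - mu * us0 j"]
      by (simp add: vinner_lin)
    then have ww: "vinner n w w = 0" using a0 by simp
    show ?thesis
    proof (rule ext)
      fix j show "mv n n M us0 j = mu * us0 j"
      proof (cases "j < n")
        case True then show ?thesis using vinner_zero_coord[OF ww True] unfolding w_def by simp
      next
        case False then show ?thesis using Rk_zero[OF us0Rk False] Rk_zero[OF mv_Rk False] by simp
      qed
    qed
  qed
  have "us0 \<noteq> (\<lambda>_. 0)"
  proof
    assume "us0 = (\<lambda>_. 0)"
    then have "vinner n us0 us0 = 0" unfolding vinner_def by simp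
    then show False using \<open>vinner n us0 us0 = 1\<close> by simp
  qed
  then have "mu \<in> {lam. \<exists>v\<in>Rk n. v \<noteq> (\<lambda>_. 0) \<and> mv n n M v = (\<lambda>j. lam * v j)}"
    using us0Rk eig by blast
  then have "mu \<le> lam_max n M" unfolding lam_max_def using fin by (intro Max_ge) auto
  then show ?thesis using bound unfolding Q_def
    by (metis mult_right_mono order_trans vinner_nonneg)
qed

lemma op_bounds:
  assumes n: "n \<ge> 1" and nz: "r < m" "c < n" "A r c \<noteq> 0" and g: "gm = lam_max n (mtm m n A)"
    and fin: "finite {lam. \<exists>v\<in>Rk n. v \<noteq> (\<lambda>_. 0) \<and> mv n n (mtm m n A) v = (\<lambda>j. lam * v j)}"
  shows "gm > 0" "\<forall>u\<in>Rk n. vinner m (mv m n A u) (mv m n A u) \<le> gm * vinner n u u"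
        "\<forall>w. vinner n (mtv m n A w) (mtv m n A w) \<le> gm * vinner m w w"
proof -
  have sym: "\<And>i j. mtm m n A i j = mtm m n A j i" unfolding mtm_def by (simp add: mult.commute)
  have R: "\<forall>u\<in>Rk n. vinner n u (mv n n (mtm m n A) u) \<le> gm * vinner n u u"
    using rayleigh[OF n sym fin] g by simp
  show B: "\<forall>u\<in>Rk n. vinner m (mv m n A u) (mv m n A u) \<le> gm * vinner n u u"
    using R by (simp add: Q_mtm)
  define e where "e = (\<lambda>j::nat. if j = c then (1::real) else 0)"
  have eRk: "e \<in> Rk n" unfolding e_def Rk_def using nz by auto
  have "mtm m n A c c \<le> gm * 1"
    using R[rule_format, OF eRk] unit_Q[OF nz(2), of "mtm m n A"] unit_inner[OF nz(2)] unfolding e_def by simp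
  moreover have "A r c * A r c \<le> mtm m n A c c" unfolding mtm_def
    using nz by (intro member_le_sum) auto
  moreover have "A r c * A r c > 0" by (metis nz(3) not_real_square_gt_zero)
  ultimately show gpos: "gm > 0" by linarith
  show "\<forall>w. vinner n (mtv m n A w) (mtv m n A w) \<le> gm * vinner m w w"
  proof
    fix w
    define u where "u = mtv m n A w"
    define X where "X = vinner n u u"
    define a where "a = mv m n A u"
    define W where "W = vinner m w w"
    have uRk: "u \<in> Rk n" unfolding u_def by (rule mtv_Rk)
    have aw: "vinner m a w = X" unfolding a_def X_def u_def by (simp add: adjoint)
    have aa: "vinner m a a \<le> gm * X" using B uRk unfolding a_def X_def by blast
    have "0 \<le> vinner m (\<lambda>j. a j - gm * w j) (\<lambda>j. a j - gm * w j)" by (rule vinner_nonneg)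
    also have "\<dots> = vinner m a a - 2 * gm * vinner m a w + gm * gm * W"
      unfolding W_def by (simp add: vinner_lin vinner_sym[of m w a] algebra_simps)
    finally have "0 \<le> vinner m a a - 2 * gm * X + gm * gm * W" using aw by simp
    then have "gm * X \<le> gm * (gm * W)" using aa by (simp add: algebra_simps)
    then have "X \<le> gm * W" using gpos by simp
    then show "vinner n (mtv m n A w) (mtv m n A w) \<le> gm * vinner m w w" unfolding X_def u_def W_def .
  qed
qed

lemma supp_attained:
  assumes "P \<in> C" "\<forall>q\<in>C. vinner k Y q \<le> vinner k Y P"
  shows "supp k C Y = ereal (vinner k Y P)"
  unfolding supp_def
proof (rule antisym)
  show "(SUP u\<in>C. ereal (vinner k Y u)) \<le> ereal (vinner k Y P)"
    using assms(2) by (intro SUP_least) simp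
  show "ereal (vinner k Y P) \<le> (SUP u\<in>C. ereal (vinner k Y u))"
    by (rule SUP_upper2[OF assms(1)]) simp
qed

lemma supp_lower: "q \<in> C \<Longrightarrow> ereal (vinner k Y q) \<le> supp k C Y"
  unfolding supp_def by (rule SUP_upper)

lemma sig_eq:
  assumes "\<forall>j\<in>{1..l}. supp (ms j) (C j) (Y j) = ereal (f j)"
  shows "sigD l ms C Y = ereal (\<Sum>j=1..l. f j)"
proof -
  have "sigD l ms C Y = (\<Sum>j=1..l. ereal (f j))" unfolding sigD_def using assms by (intro sum.cong) auto
  then show ?thesis by (simp add: sum_ereal)
qed

lemma dfun_eq:
  assumes "\<forall>j\<in>{1..l}. supp (ms j) (C j) (Y j) = ereal (f j)"
  shows "dfun l ms n A v C Y = ereal (gfun l ms n A v Y + (\<Sum>j=1..l. f j))"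
  unfolding dfun_def using sig_eq[OF assms] by simp

lemma AtY_bsub: "AtY l ms n A (bsub Y Z) c = AtY l ms n A Y c - AtY l ms n A Z c"
  unfolding AtY_def bsub_def vsub_def by (simp add: mtv_diff sum_subtractf)

lemma AtY_single:
  assumes i: "i \<in> {1..l}" and o: "\<And>j. j \<noteq> i \<Longrightarrow> Y j = Z j"
  shows "AtY l ms n A Y c = AtY l ms n A Z c + mtv (ms i) n (A i) (vsub (Y i) (Z i)) c"
proof -
  have "AtY l ms n A (bsub Y Z) c = (\<Sum>j=1..l. mtv (ms j) n (A j) (vsub (Y j) (Z j)) c)"
    unfolding AtY_def bsub_def by simp
  also have "\<dots> = (\<Sum>j=1..l. if j = i then mtv (ms i) n (A i) (vsub (Y i) (Z i)) c else 0)"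
  proof (rule sum.cong)
    fix j assume "j \<in> {1..l}"
    show "mtv (ms j) n (A j) (vsub (Y j) (Z j)) c = (if j = i then mtv (ms i) n (A i) (vsub (Y i) (Z i)) c else 0)"
    proof (cases "j = i")
      case False
      then have "vsub (Y j) (Z j) = (\<lambda>_. 0)" using o unfolding vsub_def by simp
      then show ?thesis using False by (simp add: mtv_zero)
    qed simp
  qed simp
  also have "\<dots> = mtv (ms i) n (A i) (vsub (Y i) (Z i)) c" using i by simp
  finally show ?thesis using AtY_bsub[of l ms n A Y Z c] by simp
qed

lemma vinner_AtY: "vinner n a (AtY l ms n A W) = (\<Sum>i=1..l. vinner (ms i) (mv (ms i) n (A i) a) (W i))"
proof -
  have "vinner n a (AtY l ms n A W) = (\<Sum>i=1..l. vinner n a (mtv (ms i) n (A i) (W i)))"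
    unfolding vinner_def AtY_def sum_distrib_left by (rule sum.swap)
  also have "\<dots> = (\<Sum>i=1..l. vinner (ms i) (mv (ms i) n (A i) a) (W i))"
    by (simp add: adjoint)
  finally show ?thesis .
qed

lemma BS_zero:
  assumes Y: "Y \<in> BS l ms" and nk: "\<not> (j \<in> {1..l} \<and> k < ms j)"
  shows "Y j k = 0"
proof (cases "j \<in> {1..l}")
  case True
  then have "Y j \<in> Rk (ms j)" using Y unfolding BS_def by blast
  moreover have "\<not> k < ms j" using True nk by blast
  ultimately show ?thesis by (rule Rk_zero)
next
  case False
  then have "Y j = (\<lambda>_. 0)" using Y unfolding BS_def by blast
  then show ?thesis by simp
qed

lemma coord_le_bnorm:
  assumes "Y \<in> BS l ms" "Z \<in> BS l ms"
  shows "\<bar>Y j k - Z j k\<bar> \<le> bnorm l ms (bsub Y Z)"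
proof -
  have b0: "0 \<le> bnorm l ms (bsub Y Z)" unfolding bnorm_def binner_def
    by (simp add: sum_nonneg vinner_nonneg)
  show ?thesis
  proof (cases "j \<in> {1..l} \<and> k < ms j")
    case True
    then have jj: "j \<in> {1..l}" and kk: "k < ms j" by auto
    have "\<bar>Y j k - Z j k\<bar> \<le> vnorm (ms j) (vsub (Y j) (Z j))"
      using coord_le_vnorm[OF kk, of "vsub (Y j) (Z j)"] by (simp add: vsub_def)
    also have "\<dots> \<le> bnorm l ms (bsub Y Z)" unfolding vnorm_def bnorm_def binner_def bsub_def
      using jj by (intro real_sqrt_le_mono member_le_sum) (auto simp: vinner_nonneg)
    finally show ?thesis .
  next
    case False
    then have "Y j k = 0 \<and> Z j k = 0" using BS_zero assms by blast
    then show ?thesis using b0 by simp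
  qed
qed

locale algctx =
  fixes l n :: nat
    and ms :: "nat \<Rightarrow> nat"
    and C :: "nat \<Rightarrow> (nat \<Rightarrow> real) set"
    and A :: "nat \<Rightarrow> nat \<Rightarrow> nat \<Rightarrow> real"
    and vbar :: "nat \<Rightarrow> real"
    and gam :: "nat \<Rightarrow> real"
    and x :: "nat \<Rightarrow> nat \<Rightarrow> nat \<Rightarrow> real"
    and y :: "nat \<Rightarrow> nat \<Rightarrow> nat \<Rightarrow> real"
  assumes hl: "l \<ge> 1" and hn: "n \<ge> 1"
    and hm: "\<forall>i\<in>{1..l}. ms i \<ge> 1"
    and hC: "\<forall>i\<in>{1..l}. C i \<noteq> {} \<and> C i \<subseteq> Rk (ms i) \<and> vclosed (ms i) (C i) \<and> vconvex (C i)"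
    and hA: "\<forall>i\<in>{1..l}. \<exists>r<ms i. \<exists>c<n. A i r c \<noteq> 0"
    and hv: "vbar \<in> Rk n"
    and hint: "\<exists>z\<in>Rk n. \<forall>i\<in>{1..l}. mv (ms i) n (A i) z \<in> C i"
    and hgam: "\<forall>i\<in>{1..l}. gam i = lam_max n (mtm (ms i) n (A i))"
    and hy0: "\<forall>i\<in>{1..l}. y 0 i = (\<lambda>_. 0)"
    and hpad: "\<forall>t i. i \<notin> {1..l} \<longrightarrow> y t i = (\<lambda>_. 0)"
    and hx0: "x 0 l = vbar"
    and hxs: "\<forall>t. x (Suc t) 0 = x t l"
    and hxi: "\<forall>t. \<forall>i\<in>{1..l}. x (Suc t) i =
         (\<lambda>j. x (Suc t) (i - 1) j
               - (1 / gam i) * mtv (ms i) n (A i) (mv (ms i) n (A i) (x (Suc t) (i - 1))) j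
               + (1 / gam i) * mtv (ms i) n (A i)
                   (vproj (ms i) (C i) (\<lambda>k. gam i * y t i k + mv (ms i) n (A i) (x (Suc t) (i - 1)) k)) j)"
    and hyi: "\<forall>t. \<forall>i\<in>{1..l}. y (Suc t) i =
         (\<lambda>k. y t i k + (1 / gam i) * mv (ms i) n (A i) (x (Suc t) (i - 1)) k
               - (1 / gam i) * vproj (ms i) (C i)
                   (\<lambda>k'. gam i * y t i k' + mv (ms i) n (A i) (x (Suc t) (i - 1)) k') k)"
    and fin: "\<forall>i\<in>{1..l}. finite {lam. \<exists>v\<in>Rk n. v \<noteq> (\<lambda>_. 0) \<and> mv n n (mtm (ms i) n (A i)) v = (\<lambda>j. lam * v j)}"
begin

abbreviation "Yt t i \<equiv> mixb (y (Suc t)) (y t) i"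

definition "Pj t i = vproj (ms i) (C i) (\<lambda>k. gam i * y t i k + mv (ms i) n (A i) (x (Suc t) (i - 1)) k)"

definition "sv t i = (if t = 0 then 0 else vinner (ms i) (y t i) (Pj (t - 1) i))"

definition "E t i = gfun l ms n A vbar (Yt t i) + (\<Sum>j=1..l. if j \<le> i then sv (Suc t) j else sv t j)"

definition "Dv t = gfun l ms n A vbar (y t) + (\<Sum>j=1..l. sv t j)"

lemma gam_props:
  assumes i: "i \<in> {1..l}"
  shows "gam i > 0"
    "\<forall>u\<in>Rk n. vinner (ms i) (mv (ms i) n (A i) u) (mv (ms i) n (A i) u) \<le> gam i * vinner n u u"
    "\<forall>w. vinner n (mtv (ms i) n (A i) w) (mtv (ms i) n (A i) w) \<le> gam i * vinner (ms i) w w"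
proof -
  obtain r c where rc: "r < ms i" "c < n" "A i r c \<noteq> 0" using hA i by blast
  have g: "gam i = lam_max n (mtm (ms i) n (A i))" using hgam i by blast
  have f: "finite {lam. \<exists>v\<in>Rk n. v \<noteq> (\<lambda>_. 0) \<and> mv n n (mtm (ms i) n (A i)) v = (\<lambda>j. lam * v j)}"
    using fin i by blast
  show "gam i > 0"
    "\<forall>u\<in>Rk n. vinner (ms i) (mv (ms i) n (A i) u) (mv (ms i) n (A i) u) \<le> gam i * vinner n u u"
    "\<forall>w. vinner n (mtv (ms i) n (A i) w) (mtv (ms i) n (A i) w) \<le> gam i * vinner (ms i) w w"
    using op_bounds[OF hn rc g f] by auto
qed

lemma C_props: assumes "i \<in> {1..l}"
  shows "C i \<noteq> {}" "C i \<subseteq> Rk (ms i)" "vclosed (ms i) (C i)" "vconvex (C i)"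
  using hC assms by auto

lemma Pj_props:
  assumes i: "i \<in> {1..l}"
  shows "Pj t i \<in> C i"
    "\<forall>q\<in>C i. vinner (ms i) (vsub (\<lambda>k. gam i * y t i k + mv (ms i) n (A i) (x (Suc t) (i - 1)) k) (Pj t i))
        (vsub q (Pj t i)) \<le> 0"
  using proj_char[OF C_props[OF i]] unfolding Pj_def by auto

lemma Pj_Rk: "i \<in> {1..l} \<Longrightarrow> Pj t i \<in> Rk (ms i)"
  using Pj_props(1) C_props(2) by blast

lemma hyi': "i \<in> {1..l} \<Longrightarrow> y (Suc t) i k = y t i k + (1 / gam i) * mv (ms i) n (A i) (x (Suc t) (i - 1)) k
               - (1 / gam i) * Pj t i k"
  using hyi unfolding Pj_def by simp

lemma y_Rk: "i \<in> {1..l} \<Longrightarrow> y t i \<in> Rk (ms i)"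
proof (induction t)
  case 0 then show ?case using hy0 unfolding Rk_def by simp
next
  case (Suc t)
  show ?case unfolding Rk_def
  proof (intro CollectI allI impI)
    fix k assume k: "ms i \<le> k"
    then have "\<not> k < ms i" by simp
    then show "y (Suc t) i k = 0" using hyi'[OF Suc.prems, of t k] Rk_zero[OF Suc.IH[OF Suc.prems]]
        Rk_zero[OF mv_Rk] Rk_zero[OF Pj_Rk[OF Suc.prems]] by simp
  qed
qed

lemma y_BS: "y t \<in> BS l ms"
  unfolding BS_def using y_Rk hpad by auto

lemma P_form:
  assumes i: "i \<in> {1..l}"
  shows "Pj t i k = gam i * y t i k + mv (ms i) n (A i) (x (Suc t) (i - 1)) k - gam i * y (Suc t) i k"
proof -
  have g: "gam i > 0" using gam_props(1)[OF i] .
  define W where "W = mv (ms i) n (A i) (x (Suc t) (i - 1)) k"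
  have e: "y (Suc t) i k = y t i k + (1 / gam i) * W - (1 / gam i) * Pj t i k"
    using hyi'[OF i, of t k] unfolding W_def .
  have "gam i * y (Suc t) i k = gam i * y t i k + (gam i * (1 / gam i)) * W - (gam i * (1 / gam i)) * Pj t i k"
    unfolding e by (simp only: algebra_simps)
  moreover have "gam i * (1 / gam i) = 1" using g by simp
  ultimately have "gam i * y (Suc t) i k = gam i * y t i k + W - Pj t i k" by simp
  then show ?thesis unfolding W_def by linarith
qed

lemma ynew_var:
  assumes i: "i \<in> {1..l}" and q: "q \<in> C i"
  shows "vinner (ms i) (y (Suc t) i) q \<le> vinner (ms i) (y (Suc t) i) (Pj t i)"
proof -
  have g: "gam i > 0" using gam_props(1)[OF i] .
  have e: "vsub (\<lambda>k. gam i * y t i k + mv (ms i) n (A i) (x (Suc t) (i - 1)) k) (Pj t i)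
      = (\<lambda>k. gam i * y (Suc t) i k)"
    unfolding vsub_def using P_form[OF i] by simp
  have "vinner (ms i) (\<lambda>k. gam i * y (Suc t) i k) (vsub q (Pj t i)) \<le> 0"
    using Pj_props(2)[OF i] q e by metis
  then have "gam i * (vinner (ms i) (y (Suc t) i) q - vinner (ms i) (y (Suc t) i) (Pj t i)) \<le> 0"
    unfolding vsub_def by (simp add: vinner_lin)
  then show ?thesis using g by (simp add: mult_le_0_iff)
qed

lemma supp_y:
  assumes i: "i \<in> {1..l}"
  shows "supp (ms i) (C i) (y t i) = ereal (sv t i)"
proof (cases t)
  case 0
  have "supp (ms i) (C i) (y t i) = (SUP u\<in>C i. ereal 0)"
    unfolding supp_def using 0 hy0 i by (simp add: vinner_def)
  also have "\<dots> = 0" using C_props(1)[OF i] by simp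
  finally show ?thesis using 0 by (simp add: sv_def)
next
  case (Suc t')
  have "supp (ms i) (C i) (y t i) = ereal (vinner (ms i) (y t i) (Pj t' i))"
    unfolding Suc by (rule supp_attained) (use Pj_props(1)[OF i] ynew_var[OF i] in auto)
  then show ?thesis using Suc by (simp add: sv_def)
qed

lemma sv_lower: "i \<in> {1..l} \<Longrightarrow> q \<in> C i \<Longrightarrow> vinner (ms i) (y t i) q \<le> sv t i"
  using supp_lower[of q "C i" "ms i" "y t i"] supp_y by simp

lemma supp_mix:
  assumes "j \<in> {1..l}"
  shows "supp (ms j) (C j) (Yt t i j) = ereal (if j \<le> i then sv (Suc t) j else sv t j)"
  unfolding mixb_def using supp_y[OF assms] by simp

lemma dfun_mix: "dfun l ms n A vbar C (Yt t i) = ereal (E t i)"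
  unfolding E_def using supp_mix by (intro dfun_eq) blast

lemma sig_mix: "sigD l ms C (Yt t i) = ereal (\<Sum>j=1..l. if j \<le> i then sv (Suc t) j else sv t j)"
  using supp_mix by (intro sig_eq) blast

lemma dfun_y: "dfun l ms n A vbar C (y t) = ereal (Dv t)"
  unfolding Dv_def using supp_y by (intro dfun_eq) blast

lemma AtY_mix0: "AtY l ms n A (Yt t 0) c = AtY l ms n A (y t) c"
  unfolding AtY_def mixb_def by (intro sum.cong) auto

lemma AtY_mixl: "AtY l ms n A (Yt t l) c = AtY l ms n A (y (Suc t)) c"
  unfolding AtY_def mixb_def by (intro sum.cong) auto

lemma AtY_mix_step:
  assumes i: "i \<in> {1..l}"
  shows "AtY l ms n A (Yt t i) c = AtY l ms n A (Yt t (i - 1)) c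
            + mtv (ms i) n (A i) (vsub (y (Suc t) i) (y t i)) c"
proof -
  have "AtY l ms n A (Yt t i) c = AtY l ms n A (Yt t (i - 1)) c
            + mtv (ms i) n (A i) (vsub (Yt t i i) (Yt t (i - 1) i)) c"
    using i by (intro AtY_single) (auto simp: mixb_def)
  moreover have "Yt t i i = y (Suc t) i" "Yt t (i - 1) i = y t i" using i by (auto simp: mixb_def)
  ultimately show ?thesis by simp
qed

lemma x_step:
  assumes x0: "x (Suc t) 0 = (\<lambda>c. vbar c - AtY l ms n A (y t) c)"
  shows "i \<le> l \<Longrightarrow> x (Suc t) i = (\<lambda>c. vbar c - AtY l ms n A (Yt t i) c)"
proof (induction i)
  case 0 then show ?case using x0 AtY_mix0 by simp
next
  case (Suc i)
  have si: "Suc i \<in> {1..l}" using Suc.prems by simp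
  have IH: "x (Suc t) i = (\<lambda>c. vbar c - AtY l ms n A (Yt t i) c)" using Suc by simp
  define g where "g = gam (Suc i)"
  define w where "w = mv (ms (Suc i)) n (A (Suc i)) (x (Suc t) i)"
  define P where "P = vproj (ms (Suc i)) (C (Suc i))
                   (\<lambda>k'. gam (Suc i) * y t (Suc i) k' + mv (ms (Suc i)) n (A (Suc i)) (x (Suc t) i) k')"
  have dy: "vsub (y (Suc t) (Suc i)) (y t (Suc i)) = (\<lambda>k. (1 / g) * w k - (1 / g) * P k)"
    using hyi si unfolding vsub_def g_def w_def P_def by auto
  have mt: "mtv (ms (Suc i)) n (A (Suc i)) (vsub (y (Suc t) (Suc i)) (y t (Suc i))) c
      = (1 / g) * mtv (ms (Suc i)) n (A (Suc i)) w c - (1 / g) * mtv (ms (Suc i)) n (A (Suc i)) P c" for c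
    by (simp only: dy mtv_diff mtv_scale)
  have xs: "x (Suc t) (Suc i) = (\<lambda>j. x (Suc t) i j - (1 / g) * mtv (ms (Suc i)) n (A (Suc i)) w j
             + (1 / g) * mtv (ms (Suc i)) n (A (Suc i)) P j)"
    using hxi si unfolding g_def w_def P_def by auto
  show ?case
  proof (rule ext)
    fix c
    have "AtY l ms n A (Yt t (Suc i)) c = AtY l ms n A (Yt t i) c
            + mtv (ms (Suc i)) n (A (Suc i)) (vsub (y (Suc t) (Suc i)) (y t (Suc i))) c"
      using AtY_mix_step[OF si, of t c] by simp
    then show "x (Suc t) (Suc i) c = vbar c - AtY l ms n A (Yt t (Suc i)) c"
      unfolding xs mt IH by simp
  qed
qed

lemma x_inv: "i \<le> l \<Longrightarrow> x (Suc t) i = (\<lambda>c. vbar c - AtY l ms n A (Yt t i) c)"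
proof (induction t arbitrary: i)
  case 0
  have "AtY l ms n A (y 0) c = 0" for c
    unfolding AtY_def using hy0 by (simp add: mtv_zero)
  then have "x (Suc 0) 0 = (\<lambda>c. vbar c - AtY l ms n A (y 0) c)" using hxs hx0 by simp
  then show ?case using x_step 0 by blast
next
  case (Suc t)
  have "x (Suc (Suc t)) 0 = x (Suc t) l" using hxs by simp
  also have "\<dots> = (\<lambda>c. vbar c - AtY l ms n A (Yt t l) c)" using Suc.IH by simp
  also have "\<dots> = (\<lambda>c. vbar c - AtY l ms n A (y (Suc t)) c)" using AtY_mixl by simp
  finally show ?case using x_step Suc.prems by blast
qed

lemma grad_mix:
  assumes i: "i \<in> {1..l}"
  shows "gradg l ms n A vbar i (Yt t (i - 1)) = (\<lambda>k. - mv (ms i) n (A i) (x (Suc t) (i - 1)) k)"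
proof -
  have "vsub (AtY l ms n A (Yt t (i - 1))) vbar = (\<lambda>c. - x (Suc t) (i - 1) c)"
    using x_inv[of "i - 1" t] i unfolding vsub_def by auto
  then show ?thesis unfolding gradg_def by (simp add: mv_neg)
qed

end

lemma telescope: fixes f :: "nat \<Rightarrow> real" and l :: nat
  shows "(\<Sum>i=1..l. f i - f (i - 1)) = f l - f 0"
proof (induction l)
  case 0 then show ?case by simp
next
  case (Suc l) then show ?case by (simp add: sum.cl_ivl_Suc)
qed

context algctx
begin

lemma S_diff:
  assumes i: "i \<in> {1..l}"
  shows "(\<Sum>j=1..l. if j \<le> i then sv (Suc t) j else sv t j)
       - (\<Sum>j=1..l. if j \<le> i - 1 then sv (Suc t) j else sv t j) = sv (Suc t) i - sv t i"
proof -
  have "(\<Sum>j=1..l. if j \<le> i then sv (Suc t) j else sv t j)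
       - (\<Sum>j=1..l. if j \<le> i - 1 then sv (Suc t) j else sv t j)
     = (\<Sum>j=1..l. (if j \<le> i then sv (Suc t) j else sv t j) - (if j \<le> i - 1 then sv (Suc t) j else sv t j))"
    by (simp add: sum_subtractf)
  also have "\<dots> = (\<Sum>j=1..l. if j = i then sv (Suc t) i - sv t i else 0)"
    using i by (intro sum.cong) auto
  also have "\<dots> = sv (Suc t) i - sv t i" using i by simp
  finally show ?thesis .
qed

lemma gfun_sq: "gfun l ms n A vbar Y = 1/2 * vinner n (vsub (AtY l ms n A Y) vbar) (vsub (AtY l ms n A Y) vbar)
    - 1/2 * vinner n vbar vbar"
  unfolding gfun_def vnorm_sq ..

lemma gfun_diff:
  assumes i: "i \<in> {1..l}"
  shows "gfun l ms n A vbar (Yt t i) - gfun l ms n A vbar (Yt t (i - 1))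
     = vinner (ms i) (gradg l ms n A vbar i (Yt t (i - 1))) (vsub (y (Suc t) i) (y t i))
       + 1/2 * vinner n (mtv (ms i) n (A i) (vsub (y (Suc t) i) (y t i))) (mtv (ms i) n (A i) (vsub (y (Suc t) i) (y t i)))"
proof -
  define a where "a = vsub (AtY l ms n A (Yt t (i - 1))) vbar"
  define b where "b = mtv (ms i) n (A i) (vsub (y (Suc t) i) (y t i))"
  have h: "\<And>c. AtY l ms n A (Yt t i) c = AtY l ms n A (Yt t (i - 1)) c + b c"
    unfolding b_def using AtY_mix_step[OF i] .
  have ab: "vsub (AtY l ms n A (Yt t i)) vbar = (\<lambda>c. a c + b c)"
    unfolding a_def by (rule ext) (simp add: vsub_def h)
  have "vinner n a b = vinner (ms i) (gradg l ms n A vbar i (Yt t (i - 1))) (vsub (y (Suc t) i) (y t i))"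
    unfolding a_def b_def gradg_def by (simp add: adjoint)
  moreover have "gfun l ms n A vbar (Yt t i) = 1/2 * vinner n (\<lambda>c. a c + b c) (\<lambda>c. a c + b c) - 1/2 * vinner n vbar vbar"
    by (simp only: gfun_sq ab)
  moreover have "gfun l ms n A vbar (Yt t (i - 1)) = 1/2 * vinner n a a - 1/2 * vinner n vbar vbar"
    unfolding a_def by (rule gfun_sq)
  moreover have "vinner n (\<lambda>c. a c + b c) (\<lambda>c. a c + b c) = vinner n a a + 2 * vinner n a b + vinner n b b"
    by (rule vinner_expand_add)
  ultimately show ?thesis unfolding b_def by linarith
qed

lemma part1_real:
  assumes i: "i \<in> {1..l}"
  shows "E t i - E t (i - 1) \<le> 1/2 * (vinner (ms i) (gradg l ms n A vbar i (Yt t (i - 1))) (vsub (y (Suc t) i) (y t i))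
            + sv (Suc t) i - sv t i)"
    and "1/2 * (vinner (ms i) (gradg l ms n A vbar i (Yt t (i - 1))) (vsub (y (Suc t) i) (y t i))
            + sv (Suc t) i - sv t i) \<le> - (gam i / 2) * vinner (ms i) (vsub (y (Suc t) i) (y t i)) (vsub (y (Suc t) i) (y t i))"
proof -
  define G where "G = gradg l ms n A vbar i (Yt t (i - 1))"
  define D where "D = vsub (y (Suc t) i) (y t i)"
  define P where "P = Pj t i"
  define N where "N = vinner (ms i) D D"
  have g: "gam i > 0" using gam_props(1)[OF i] .
  have Ed: "E t i - E t (i - 1) = vinner (ms i) G D + 1/2 * vinner n (mtv (ms i) n (A i) D) (mtv (ms i) n (A i) D)
       + (sv (Suc t) i - sv t i)"
    unfolding E_def G_def D_def using gfun_diff[OF i, of t] S_diff[OF i, of t] by simp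
  have bb: "vinner n (mtv (ms i) n (A i) D) (mtv (ms i) n (A i) D) \<le> gam i * N"
    unfolding N_def using gam_props(3)[OF i] by blast
  have sv1: "sv (Suc t) i = vinner (ms i) (y (Suc t) i) P" unfolding sv_def P_def by simp
  have sv0: "vinner (ms i) (y t i) P \<le> sv t i" unfolding P_def
    using sv_lower[OF i Pj_props(1)[OF i]] .
  have GP: "(\<lambda>k. G k + P k) = (\<lambda>k. (- gam i) * D k)"
    unfolding G_def P_def D_def vsub_def using grad_mix[OF i, of t] P_form[OF i, of t]
    by (auto simp: algebra_simps)
  have "vinner (ms i) G D + vinner (ms i) P D = vinner (ms i) (\<lambda>k. G k + P k) D"
    by (simp only: vinner_add_left)
  also have "\<dots> = vinner (ms i) (\<lambda>k. (- gam i) * D k) D" by (simp only: GP)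
  also have "\<dots> = (- gam i) * N" unfolding N_def by (simp only: vinner_scale_left)
  also have "\<dots> = - (gam i * N)" by simp
  finally have "vinner (ms i) G D + vinner (ms i) P D = - (gam i * N)" .
  moreover have "vinner (ms i) (y (Suc t) i) P - vinner (ms i) (y t i) P = vinner (ms i) P D"
    unfolding D_def vsub_def by (simp add: vinner_lin vinner_sym[of "ms i" P])
  ultimately have key: "vinner (ms i) G D + sv (Suc t) i - sv t i \<le> - (gam i * N)"
    using sv1 sv0 by linarith
  have N0: "0 \<le> N" unfolding N_def by (rule vinner_nonneg)
  show "E t i - E t (i - 1) \<le> 1/2 * (vinner (ms i) (gradg l ms n A vbar i (Yt t (i - 1))) (vsub (y (Suc t) i) (y t i))
            + sv (Suc t) i - sv t i)"
  proof -
    define Em where "Em = E t (i - 1)"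
    have r1: "E t i - Em \<le> 1/2 * (vinner (ms i) G D + sv (Suc t) i - sv t i)"
      using Ed bb key unfolding Em_def[symmetric] by argo
    then show ?thesis unfolding G_def D_def Em_def .
  qed
  show "1/2 * (vinner (ms i) (gradg l ms n A vbar i (Yt t (i - 1))) (vsub (y (Suc t) i) (y t i))
            + sv (Suc t) i - sv t i) \<le> - (gam i / 2) * vinner (ms i) (vsub (y (Suc t) i) (y t i)) (vsub (y (Suc t) i) (y t i))"
    using key unfolding G_def[symmetric] D_def[symmetric] N_def[symmetric] by argo
qed

lemma part1:
  assumes i: "i \<in> {1..l}"
  shows "dfun l ms n A vbar C (mixb (y (Suc t)) (y t) i)
          - dfun l ms n A vbar C (mixb (y (Suc t)) (y t) (i - 1))
        \<le> ereal (1/2) *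
           (ereal (vinner (ms i) (gradg l ms n A vbar i (mixb (y (Suc t)) (y t) (i - 1)))
                                 (vsub (y (Suc t) i) (y t i)))
            + sigD l ms C (mixb (y (Suc t)) (y t) i)
            - sigD l ms C (mixb (y (Suc t)) (y t) (i - 1)))
      \<and> ereal (1/2) *
           (ereal (vinner (ms i) (gradg l ms n A vbar i (mixb (y (Suc t)) (y t) (i - 1)))
                                 (vsub (y (Suc t) i) (y t i)))
            + sigD l ms C (mixb (y (Suc t)) (y t) i)
            - sigD l ms C (mixb (y (Suc t)) (y t) (i - 1)))
        \<le> ereal (- (gam i / 2) * (vnorm (ms i) (vsub (y (Suc t) i) (y t i)))\<^sup>2)"
proof -
  define a where "a = vinner (ms i) (gradg l ms n A vbar i (mixb (y (Suc t)) (y t) (i - 1))) (vsub (y (Suc t) i) (y t i))"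
  define S1 where "S1 = (\<Sum>j=1..l. if j \<le> i then sv (Suc t) j else sv t j)"
  define S0 where "S0 = (\<Sum>j=1..l. if j \<le> i - 1 then sv (Suc t) j else sv t j)"
  have e1: "ereal (1/2) * (ereal a + sigD l ms C (Yt t i) - sigD l ms C (Yt t (i - 1)))
       = ereal (1/2 * (a + sv (Suc t) i - sv t i))"
    unfolding sig_mix S1_def[symmetric] S0_def[symmetric] using S_diff[OF i, of t]
    unfolding S1_def[symmetric] S0_def[symmetric] by simp
  have e2: "dfun l ms n A vbar C (Yt t i) - dfun l ms n A vbar C (Yt t (i - 1)) = ereal (E t i - E t (i - 1))"
    unfolding dfun_mix by simp
  show ?thesis unfolding a_def[symmetric] e1 e2 vnorm_sq
    using part1_real[OF i, of t] unfolding a_def by simp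
qed

lemma E0: "E t 0 = Dv t"
proof -
  have "gfun l ms n A vbar (Yt t 0) = gfun l ms n A vbar (y t)"
    unfolding gfun_def vsub_def using AtY_mix0 by simp
  moreover have "(\<Sum>j=1..l. if j \<le> 0 then sv (Suc t) j else sv t j) = (\<Sum>j=1..l. sv t j)"
    by (intro sum.cong) auto
  ultimately show ?thesis unfolding E_def Dv_def by simp
qed

lemma El: "E t l = Dv (Suc t)"
proof -
  have "gfun l ms n A vbar (Yt t l) = gfun l ms n A vbar (y (Suc t))"
    unfolding gfun_def vsub_def using AtY_mixl by simp
  moreover have "(\<Sum>j=1..l. if j \<le> l then sv (Suc t) j else sv t j) = (\<Sum>j=1..l. sv (Suc t) j)"
    by (intro sum.cong) auto
  ultimately show ?thesis unfolding E_def Dv_def by simp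
qed

definition "cc = Min (gam ` {1..l}) / 2"

lemma cc_pos: "cc > 0"
proof -
  have "Min (gam ` {1..l}) \<in> gam ` {1..l}" using hl by (intro Min_in) auto
  then obtain i where "i \<in> {1..l}" "Min (gam ` {1..l}) = gam i" by auto
  then show ?thesis unfolding cc_def using gam_props(1) by simp
qed

lemma cc_le: "i \<in> {1..l} \<Longrightarrow> cc \<le> gam i / 2"
  unfolding cc_def by (simp add: Min_le)

lemma binner_nonneg: "0 \<le> binner l ms Y Y"
  unfolding binner_def by (simp add: sum_nonneg vinner_nonneg)

lemma bnorm_sq: "(bnorm l ms Y)\<^sup>2 = binner l ms Y Y"
  unfolding bnorm_def using binner_nonneg by simp

lemma Dv_dec: "Dv (Suc t) - Dv t \<le> - cc * binner l ms (bsub (y (Suc t)) (y t)) (bsub (y (Suc t)) (y t))"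
proof -
  have "Dv (Suc t) - Dv t = (\<Sum>i=1..l. E t i - E t (i - 1))"
    using telescope[of "E t" l] E0 El by simp
  also have "\<dots> \<le> (\<Sum>i=1..l. - cc * vinner (ms i) (vsub (y (Suc t) i) (y t i)) (vsub (y (Suc t) i) (y t i)))"
  proof (rule sum_mono)
    fix i assume i: "i \<in> {1..l}"
    have "E t i - E t (i - 1) \<le> - (gam i / 2) * vinner (ms i) (vsub (y (Suc t) i) (y t i)) (vsub (y (Suc t) i) (y t i))"
      by (rule order_trans[OF part1_real(1)[OF i, of t] part1_real(2)[OF i, of t]])
    moreover have "cc * vinner (ms i) (vsub (y (Suc t) i) (y t i)) (vsub (y (Suc t) i) (y t i))
        \<le> (gam i / 2) * vinner (ms i) (vsub (y (Suc t) i) (y t i)) (vsub (y (Suc t) i) (y t i))"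
      using cc_le[OF i] by (intro mult_right_mono vinner_nonneg)
    ultimately show "E t i - E t (i - 1) \<le> - cc * vinner (ms i) (vsub (y (Suc t) i) (y t i)) (vsub (y (Suc t) i) (y t i))"
      by simp
  qed
  also have "\<dots> = - cc * binner l ms (bsub (y (Suc t)) (y t)) (bsub (y (Suc t)) (y t))"
    unfolding binner_def bsub_def by (simp add: sum_distrib_left)
  finally show ?thesis .
qed

lemma part2: "\<exists>c>0. \<forall>t. dfun l ms n A vbar C (y (Suc t)) - dfun l ms n A vbar C (y t)
                  \<le> ereal (- c * (bnorm l ms (bsub (y (Suc t)) (y t)))\<^sup>2)"
  using cc_pos Dv_dec unfolding dfun_y bnorm_sq by (intro exI[of _ cc]) auto

lemma Dv_lower: "\<exists>K. \<forall>t. K \<le> Dv t"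
proof -
  obtain z where zRk: "z \<in> Rk n" and zC: "\<forall>i\<in>{1..l}. mv (ms i) n (A i) z \<in> C i" using hint by blast
  define K where "K = - 1/2 * vinner n vbar vbar - 1/2 * vinner n z z + vinner n z vbar"
  have "K \<le> Dv t" for t
  proof -
    define a where "a = AtY l ms n A (y t)"
    define u where "u = vsub a vbar"
    have "(\<Sum>j=1..l. vinner (ms j) (y t j) (mv (ms j) n (A j) z)) \<le> (\<Sum>j=1..l. sv t j)"
      using zC sv_lower by (intro sum_mono) auto
    moreover have "(\<Sum>j=1..l. vinner (ms j) (y t j) (mv (ms j) n (A j) z)) = vinner n z a"
      unfolding a_def vinner_AtY by (simp add: vinner_sym)
    moreover have "0 \<le> vinner n (\<lambda>c. u c + z c) (\<lambda>c. u c + z c)" by (rule vinner_nonneg)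
    moreover have "vinner n u z = vinner n z a - vinner n z vbar"
      unfolding u_def vsub_def by (simp add: vinner_lin vinner_sym[of n z])
    ultimately show ?thesis unfolding Dv_def gfun_sq K_def a_def[symmetric] u_def[symmetric] vinner_expand_add
      by linarith
  qed
  then show ?thesis by blast
qed

lemma part3_binner: "(\<lambda>t. binner l ms (bsub (y (Suc t)) (y t)) (bsub (y (Suc t)) (y t))) \<longlonglongrightarrow> 0"
proof -
  obtain K where K: "\<forall>t. K \<le> Dv t" using Dv_lower by blast
  have dec: "decseq Dv"
  proof (rule decseq_SucI)
    fix t
    have "0 \<le> cc * binner l ms (bsub (y (Suc t)) (y t)) (bsub (y (Suc t)) (y t))"
      using cc_pos binner_nonneg by (intro mult_nonneg_nonneg) auto
    then show "Dv (Suc t) \<le> Dv t" using Dv_dec[of t] by linarith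
  qed
  obtain L where L: "Dv \<longlonglongrightarrow> L" using decseq_convergent[OF dec K] by blast
  have d: "(\<lambda>t. Dv t - Dv (Suc t)) \<longlonglongrightarrow> L - L"
    using L LIMSEQ_Suc[OF L] by (intro tendsto_diff)
  have "(\<lambda>t. (Dv t - Dv (Suc t)) / cc) \<longlonglongrightarrow> (L - L) / cc"
    using d cc_pos by (intro tendsto_divide tendsto_const) auto
  then have l0: "(\<lambda>t. (Dv t - Dv (Suc t)) / cc) \<longlonglongrightarrow> 0" by simp
  show ?thesis
  proof (rule tendsto_abs_le0[OF _ l0])
    fix t
    have "cc * binner l ms (bsub (y (Suc t)) (y t)) (bsub (y (Suc t)) (y t)) \<le> Dv t - Dv (Suc t)"
      using Dv_dec[of t] by simp
    then have "binner l ms (bsub (y (Suc t)) (y t)) (bsub (y (Suc t)) (y t)) \<le> (Dv t - Dv (Suc t)) / cc"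
      using cc_pos by (simp add: field_simps)
    then show "\<bar>binner l ms (bsub (y (Suc t)) (y t)) (bsub (y (Suc t)) (y t))\<bar> \<le> (Dv t - Dv (Suc t)) / cc"
      using binner_nonneg by simp
  qed
qed

lemma part3: "(\<lambda>t. bnorm l ms (bsub (y (Suc t)) (y t))) \<longlonglongrightarrow> 0"
  using tendsto_real_sqrt[OF part3_binner] unfolding bnorm_def by simp

lemma dcoord: "(\<lambda>t. y (Suc t) j k - y t j k) \<longlonglongrightarrow> 0"
  by (rule tendsto_abs_le0[OF _ part3]) (rule coord_le_bnorm[OF y_BS y_BS])

end

context algctx
begin

lemma bnorm_nonneg: "0 \<le> bnorm l ms Y"
  unfolding bnorm_def using binner_nonneg by simp

lemma subgrad:
  assumes Y: "Y \<in> BS l ms"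
    and P: "\<And>i. i \<in> {1..l} \<Longrightarrow> Pp i \<in> C i"
    and Pv: "\<And>i q. i \<in> {1..l} \<Longrightarrow> q \<in> C i \<Longrightarrow> vinner (ms i) (Y i) q \<le> vinner (ms i) (Y i) (Pp i)"
  shows "(\<lambda>i. if i \<in> {1..l} then (\<lambda>k. gradg l ms n A vbar i Y k + Pp i k) else (\<lambda>_. 0))
           \<in> subdiff l ms (dfun l ms n A vbar C) Y"
proof -
  define S where "S = (\<lambda>i. if i \<in> {1..l} then (\<lambda>k. gradg l ms n A vbar i Y k + Pp i k) else (\<lambda>_::nat. 0::real))"
  have SBS: "S \<in> BS l ms"
    unfolding BS_def
  proof (intro CollectI conjI ballI allI impI)
    fix i assume i: "i \<in> {1..l}"
    have "Pp i \<in> Rk (ms i)" using P[OF i] C_props(2)[OF i] by blast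
    then show "S i \<in> Rk (ms i)" unfolding S_def Rk_def gradg_def mv_def using i by auto
  next
    fix i assume ni: "i \<notin> {1..l}" show "S i = (\<lambda>_. 0)" unfolding S_def by (rule if_not_P[OF ni])
  qed
  define SY where "SY = (\<Sum>j=1..l. vinner (ms j) (Y j) (Pp j))"
  have supY: "\<forall>j\<in>{1..l}. supp (ms j) (C j) (Y j) = ereal (vinner (ms j) (Y j) (Pp j))"
    using P Pv by (auto intro!: supp_attained)
  have dY: "dfun l ms n A vbar C Y = ereal (gfun l ms n A vbar Y + SY)"
    unfolding SY_def by (rule dfun_eq[OF supY])
  have ineq: "dfun l ms n A vbar C Y + ereal (binner l ms S (bsub Z Y)) \<le> dfun l ms n A vbar C Z"
    if Z: "Z \<in> BS l ms" for Z
  proof -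
    define SZ where "SZ = (\<Sum>j=1..l. vinner (ms j) (Z j) (Pp j))"
    have sz: "ereal SZ \<le> sigD l ms C Z"
    proof -
      have "(\<Sum>j=1..l. ereal (vinner (ms j) (Z j) (Pp j))) \<le> (\<Sum>j=1..l. supp (ms j) (C j) (Z j))"
        using P by (intro sum_mono supp_lower) auto
      then show ?thesis unfolding SZ_def sigD_def by (simp add: sum_ereal)
    qed
    have dZ: "ereal (gfun l ms n A vbar Z + SZ) \<le> dfun l ms n A vbar C Z"
    proof -
      have "ereal (gfun l ms n A vbar Z + SZ) = ereal (gfun l ms n A vbar Z) + ereal SZ" by simp
      also have "\<dots> \<le> ereal (gfun l ms n A vbar Z) + sigD l ms C Z" using sz by (rule add_left_mono)
      finally show ?thesis unfolding dfun_def .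
    qed
    define a where "a = vsub (AtY l ms n A Y) vbar"
    define b where "b = AtY l ms n A (bsub Z Y)"
    have ab: "vsub (AtY l ms n A Z) vbar = (\<lambda>c. a c + b c)"
      unfolding a_def b_def vsub_def by (rule ext) (simp add: AtY_bsub)
    have gZ: "gfun l ms n A vbar Z = 1/2 * vinner n (\<lambda>c. a c + b c) (\<lambda>c. a c + b c) - 1/2 * vinner n vbar vbar"
      by (simp only: gfun_sq ab)
    have gY: "gfun l ms n A vbar Y = 1/2 * vinner n a a - 1/2 * vinner n vbar vbar"
      unfolding a_def by (rule gfun_sq)
    have ex: "vinner n (\<lambda>c. a c + b c) (\<lambda>c. a c + b c) = vinner n a a + 2 * vinner n a b + vinner n b b"
      by (rule vinner_expand_add)
    have bb0: "0 \<le> vinner n b b" by (rule vinner_nonneg)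
    have pz: "vinner (ms i) (Pp i) (bsub Z Y i) = vinner (ms i) (Z i) (Pp i) - vinner (ms i) (Y i) (Pp i)" for i
      unfolding bsub_def vsub_def by (simp add: vinner_diff_right vinner_sym[of "ms i" "Pp i"])
    have "binner l ms S (bsub Z Y) = (\<Sum>i=1..l. vinner (ms i) (mv (ms i) n (A i) a) (bsub Z Y i)
            + vinner (ms i) (Pp i) (bsub Z Y i))"
      unfolding binner_def by (intro sum.cong) (auto simp: S_def vinner_add_left gradg_def a_def)
    also have "\<dots> = vinner n a b + (SZ - SY)"
      unfolding sum.distrib b_def vinner_AtY pz sum_subtractf SZ_def SY_def ..
    finally have bin: "binner l ms S (bsub Z Y) = vinner n a b + (SZ - SY)" .
    have "gfun l ms n A vbar Y + SY + binner l ms S (bsub Z Y) \<le> gfun l ms n A vbar Z + SZ"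
      using gZ gY ex bb0 bin by argo
    then have "dfun l ms n A vbar C Y + ereal (binner l ms S (bsub Z Y)) \<le> ereal (gfun l ms n A vbar Z + SZ)"
      unfolding dY by simp
    then show ?thesis using dZ by (rule order_trans)
  qed
  have "S \<in> subdiff l ms (dfun l ms n A vbar C) Y"
    unfolding subdiff_def using SBS dY ineq by simp
  then show ?thesis unfolding S_def .
qed

definition "Sg t = (\<lambda>i. if i \<in> {1..l} then (\<lambda>k. gradg l ms n A vbar i (y (Suc t)) k + Pj t i k) else (\<lambda>_. 0))"

lemma Sg_sub: "Sg t \<in> subdiff l ms (dfun l ms n A vbar C) (y (Suc t))"
  unfolding Sg_def by (rule subgrad[OF y_BS Pj_props(1) ynew_var])

lemma AtY_zero: "AtY l ms n A (\<lambda>_ _. 0) c = 0"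
  unfolding AtY_def by (simp add: mtv_zero)

lemma Sg_coord: "(\<lambda>t. Sg t i k) \<longlonglongrightarrow> 0"
proof (cases "i \<in> {1..l}")
  case False
  have "Sg t i = (\<lambda>_. 0)" for t unfolding Sg_def by (rule if_not_P[OF False])
  then show ?thesis by simp
next
  case True
  note i = True
  have eq: "Sg t i k = mv (ms i) n (A i) (AtY l ms n A (bsub (y (Suc t)) (Yt t (i - 1)))) k
             + gam i * (- (y (Suc t) i k - y t i k))" for t
  proof -
    have xi: "x (Suc t) (i - 1) = (\<lambda>c. vbar c - AtY l ms n A (Yt t (i - 1)) c)"
    proof -
      have il: "i \<le> l" using i by simp
      have "i - 1 \<le> l" using le_trans[OF diff_le_self il] .
      then show ?thesis by (rule x_inv)
    qed
    have f: "(\<lambda>c. vsub (AtY l ms n A (y (Suc t))) vbar c + (vbar c - AtY l ms n A (Yt t (i - 1)) c))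
        = AtY l ms n A (bsub (y (Suc t)) (Yt t (i - 1)))"
      by (rule ext) (simp add: vsub_def AtY_bsub)
    have "Sg t i k = mv (ms i) n (A i) (vsub (AtY l ms n A (y (Suc t))) vbar) k
        + mv (ms i) n (A i) (\<lambda>c. vbar c - AtY l ms n A (Yt t (i - 1)) c) k
        + gam i * (- (y (Suc t) i k - y t i k))"
      unfolding Sg_def gradg_def using i P_form[OF i, of t k] xi by (simp add: algebra_simps)
    also have "mv (ms i) n (A i) (vsub (AtY l ms n A (y (Suc t))) vbar) k
        + mv (ms i) n (A i) (\<lambda>c. vbar c - AtY l ms n A (Yt t (i - 1)) c) k
        = mv (ms i) n (A i) (AtY l ms n A (bsub (y (Suc t)) (Yt t (i - 1)))) k"
      unfolding f[symmetric] mv_add ..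
    finally show ?thesis .
  qed
  have w0: "(\<lambda>t. bsub (y (Suc t)) (Yt t (i - 1)) j r) \<longlonglongrightarrow> 0" for j r
  proof (cases "j \<le> i - 1")
    case True then show ?thesis unfolding bsub_def vsub_def mixb_def by simp
  next
    case False then show ?thesis unfolding bsub_def vsub_def mixb_def using dcoord by simp
  qed
  have l1: "(\<lambda>t. mv (ms i) n (A i) (AtY l ms n A (bsub (y (Suc t)) (Yt t (i - 1)))) k)
      \<longlonglongrightarrow> mv (ms i) n (A i) (AtY l ms n A (\<lambda>_ _. 0)) k"
    by (intro tendsto_mv tendsto_AtY w0)
  have z: "AtY l ms n A (\<lambda>_ _. 0) = (\<lambda>c. 0)" using AtY_zero by (rule ext)
  have l2: "(\<lambda>t. gam i * (- (y (Suc t) i k - y t i k))) \<longlonglongrightarrow> gam i * (- 0)"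
    by (intro tendsto_mult tendsto_const tendsto_minus dcoord)
  have "(\<lambda>t. mv (ms i) n (A i) (AtY l ms n A (bsub (y (Suc t)) (Yt t (i - 1)))) k
             + gam i * (- (y (Suc t) i k - y t i k))) \<longlonglongrightarrow> mv (ms i) n (A i) (\<lambda>c. 0) k + gam i * (- 0)"
    using tendsto_add[OF l1 l2] unfolding z .
  then show ?thesis unfolding eq by (simp add: mv_zero)
qed

lemma part4: "(\<lambda>t. dist0 l ms (subdiff l ms (dfun l ms n A vbar C) (y t))) \<longlonglongrightarrow> 0"
proof -
  have ub: "dist0 l ms (subdiff l ms (dfun l ms n A vbar C) (y (Suc t))) \<le> ereal (bnorm l ms (Sg t))" for t
    unfolding dist0_def by (rule INF_lower[OF Sg_sub])
  have lb: "0 \<le> dist0 l ms (subdiff l ms (dfun l ms n A vbar C) (y (Suc t)))" for t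
    unfolding dist0_def by (rule INF_greatest) (simp add: bnorm_nonneg)
  have "(\<lambda>t. bnorm l ms (Sg t)) \<longlonglongrightarrow> 0" by (intro tendsto_bnorm0 Sg_coord)
  then have lu: "(\<lambda>t. ereal (bnorm l ms (Sg t))) \<longlonglongrightarrow> ereal 0" by (rule tendsto_ereal)
  have "(\<lambda>t. dist0 l ms (subdiff l ms (dfun l ms n A vbar C) (y (Suc t)))) \<longlonglongrightarrow> 0"
  proof (rule tendsto_sandwich[of "\<lambda>_. 0" _ _ "\<lambda>t. ereal (bnorm l ms (Sg t))"])
    show "\<forall>\<^sub>F t in sequentially. 0 \<le> dist0 l ms (subdiff l ms (dfun l ms n A vbar C) (y (Suc t)))"
      using lb by (intro always_eventually) auto
    show "\<forall>\<^sub>F t in sequentially. dist0 l ms (subdiff l ms (dfun l ms n A vbar C) (y (Suc t))) \<le> ereal (bnorm l ms (Sg t))"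
      using ub by (intro always_eventually) auto
    show "(\<lambda>t. ereal (bnorm l ms (Sg t))) \<longlonglongrightarrow> 0" using lu by (simp add: zero_ereal_def)
  qed (rule tendsto_const)
  then show ?thesis by (rule LIMSEQ_imp_Suc)
qed

end

context algctx
begin

lemma part5:
  assumes Ys: "Ys \<in> BS l ms" and r: "strict_mono r"
    and cv: "(\<lambda>t. bnorm l ms (bsub (y (r t)) Ys)) \<longlonglongrightarrow> 0"
    and Z: "Z \<in> BS l ms"
  shows "dfun l ms n A vbar C Ys \<le> dfun l ms n A vbar C Z"
proof -
  have F1: "(\<lambda>t. y (r t) j k) \<longlonglongrightarrow> Ys j k" for j k
  proof -
    have "(\<lambda>t. y (r t) j k - Ys j k) \<longlonglongrightarrow> 0"
      by (rule tendsto_abs_le0[OF _ cv]) (rule coord_le_bnorm[OF y_BS Ys])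
    from tendsto_add[OF this tendsto_const[of "Ys j k"]] show ?thesis by simp
  qed
  have dsub: "(\<lambda>t. y (Suc (r t)) j k - y (r t) j k) \<longlonglongrightarrow> 0" for j k
    using LIMSEQ_subseq_LIMSEQ[OF dcoord r] by (simp add: o_def)
  have F2: "(\<lambda>t. y (Suc (r t)) j k) \<longlonglongrightarrow> Ys j k" for j k
    using tendsto_add[OF dsub[of j k] F1[of j k]] by simp
  have F3: "(\<lambda>t. mixb (y (Suc (r t))) (y (r t)) (i - 1) j k) \<longlonglongrightarrow> Ys j k" for i j k
    unfolding mixb_def by (cases "j \<le> i - 1") (simp_all add: F1 F2)
  define Pst where "Pst i = mv (ms i) n (A i) (\<lambda>c. vbar c - AtY l ms n A Ys c)" for i
  have F4: "(\<lambda>t. Pj (r t) i k) \<longlonglongrightarrow> Pst i k" if i: "i \<in> {1..l}" for i k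
  proof -
    have il: "i \<le> l" using i by simp
    have il1: "i - 1 \<le> l" using le_trans[OF diff_le_self il] .
    have eq: "Pj (r t) i k = gam i * y (r t) i k
        + mv (ms i) n (A i) (\<lambda>c. vbar c - AtY l ms n A (mixb (y (Suc (r t))) (y (r t)) (i - 1)) c) k
        - gam i * y (Suc (r t)) i k" for t
      using P_form[OF i, of "r t" k] x_inv[OF il1, of "r t"] by simp
    have "(\<lambda>t. gam i * y (r t) i k
        + mv (ms i) n (A i) (\<lambda>c. vbar c - AtY l ms n A (mixb (y (Suc (r t))) (y (r t)) (i - 1)) c) k
        - gam i * y (Suc (r t)) i k)
      \<longlonglongrightarrow> gam i * Ys i k + mv (ms i) n (A i) (\<lambda>c. vbar c - AtY l ms n A Ys c) k - gam i * Ys i k"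
      by (intro tendsto_diff tendsto_add tendsto_mult tendsto_const tendsto_mv tendsto_AtY F1 F2 F3)
    then show ?thesis unfolding eq Pst_def by simp
  qed
  have F5: "Pst i \<in> C i" if i: "i \<in> {1..l}" for i
    using C_props(3)[OF i] unfolding vclosed_def
  proof (elim allE impE)
    show "\<forall>t. Pj (r t) i \<in> C i" using Pj_props(1)[OF i] by blast
    show "Pst i \<in> Rk (ms i)" unfolding Pst_def by (rule mv_Rk)
    show "(\<lambda>t. vnorm (ms i) (vsub (Pj (r t) i) (Pst i))) \<longlonglongrightarrow> 0"
      by (rule tendsto_vnorm_sub) (rule F4[OF i])
  qed
  have F6: "vinner (ms i) (Ys i) q \<le> vinner (ms i) (Ys i) (Pst i)" if i: "i \<in> {1..l}" and q: "q \<in> C i" for i q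
  proof (rule LIMSEQ_le)
    show "(\<lambda>t. vinner (ms i) (y (Suc (r t)) i) q) \<longlonglongrightarrow> vinner (ms i) (Ys i) q"
      by (intro tendsto_vinner F2 tendsto_const)
    show "(\<lambda>t. vinner (ms i) (y (Suc (r t)) i) (Pj (r t) i)) \<longlonglongrightarrow> vinner (ms i) (Ys i) (Pst i)"
      by (intro tendsto_vinner F2 F4[OF i])
    show "\<exists>N. \<forall>t\<ge>N. vinner (ms i) (y (Suc (r t)) i) q \<le> vinner (ms i) (y (Suc (r t)) i) (Pj (r t) i)"
      using ynew_var[OF i q] by blast
  qed
  define S where "S = (\<lambda>i. if i \<in> {1..l} then (\<lambda>k. gradg l ms n A vbar i Ys k + Pst i k) else (\<lambda>_::nat. 0::real))"
  have Ssub: "S \<in> subdiff l ms (dfun l ms n A vbar C) Ys"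
    unfolding S_def by (rule subgrad[OF Ys F5 F6])
  have S0: "S i k = 0" for i k
  proof (cases "i \<in> {1..l}")
    case True
    have "gradg l ms n A vbar i Ys k + Pst i k
        = mv (ms i) n (A i) (\<lambda>c. vsub (AtY l ms n A Ys) vbar c + (vbar c - AtY l ms n A Ys c)) k"
      unfolding gradg_def Pst_def mv_add ..
    also have "(\<lambda>c. vsub (AtY l ms n A Ys) vbar c + (vbar c - AtY l ms n A Ys c)) = (\<lambda>c. 0)"
      unfolding vsub_def by simp
    finally show ?thesis unfolding S_def using True by (simp add: mv_zero)
  next
    case False
    have "S i = (\<lambda>_. 0)" unfolding S_def by (rule if_not_P[OF False])
    then show ?thesis by simp
  qed
  have "binner l ms S (bsub Z Ys) = 0"
    unfolding binner_def by (intro sum.neutral ballI vinner_vanish) (simp add: S0)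
  moreover have "dfun l ms n A vbar C Ys + ereal (binner l ms S (bsub Z Ys)) \<le> dfun l ms n A vbar C Z"
    using Ssub Z unfolding subdiff_def by blast
  ultimately show ?thesis by (simp add: zero_ereal_def[symmetric])
qed

lemma main:
  shows
    "(\<forall>t. \<forall>i\<in>{1..l}.
        dfun l ms n A vbar C (mixb (y (Suc t)) (y t) i)
          - dfun l ms n A vbar C (mixb (y (Suc t)) (y t) (i - 1))
        \<le> ereal (1/2) *
           (ereal (vinner (ms i) (gradg l ms n A vbar i (mixb (y (Suc t)) (y t) (i - 1)))
                                 (vsub (y (Suc t) i) (y t i)))
            + sigD l ms C (mixb (y (Suc t)) (y t) i)
            - sigD l ms C (mixb (y (Suc t)) (y t) (i - 1)))
      \<and> ereal (1/2) *
           (ereal (vinner (ms i) (gradg l ms n A vbar i (mixb (y (Suc t)) (y t) (i - 1)))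
                                 (vsub (y (Suc t) i) (y t i)))
            + sigD l ms C (mixb (y (Suc t)) (y t) i)
            - sigD l ms C (mixb (y (Suc t)) (y t) (i - 1)))
        \<le> ereal (- (gam i / 2) * (vnorm (ms i) (vsub (y (Suc t) i) (y t i)))\<^sup>2))
     \<and> (\<exists>c>0. \<forall>t. dfun l ms n A vbar C (y (Suc t)) - dfun l ms n A vbar C (y t)
                  \<le> ereal (- c * (bnorm l ms (bsub (y (Suc t)) (y t)))\<^sup>2))
     \<and> (\<lambda>t. bnorm l ms (bsub (y (Suc t)) (y t))) \<longlonglongrightarrow> 0
     \<and> (\<lambda>t. dist0 l ms (subdiff l ms (dfun l ms n A vbar C) (y t))) \<longlonglongrightarrow> 0
     \<and> (\<forall>Ys\<in>BS l ms. (\<exists>r. strict_mono r \<and> (\<lambda>t. bnorm l ms (bsub (y (r t)) Ys)) \<longlonglongrightarrow> 0)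
          \<longrightarrow> (\<forall>Z\<in>BS l ms. dfun l ms n A vbar C Ys \<le> dfun l ms n A vbar C Z))"
  using part1 part2 part3 part4 part5 by blast

end

theorem proposition3p2:
  fixes l n :: nat
    and ms :: "nat \<Rightarrow> nat"
    and C :: "nat \<Rightarrow> (nat \<Rightarrow> real) set"
    and A :: "nat \<Rightarrow> nat \<Rightarrow> nat \<Rightarrow> real"
    and vbar :: "nat \<Rightarrow> real"
    and gam :: "nat \<Rightarrow> real"
    and x :: "nat \<Rightarrow> nat \<Rightarrow> nat \<Rightarrow> real"
    and y :: "nat \<Rightarrow> nat \<Rightarrow> nat \<Rightarrow> real"
  assumes hl: "l \<ge> 1" and hn: "n \<ge> 1"
    and hm: "\<forall>i\<in>{1..l}. ms i \<ge> 1"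
    and hC: "\<forall>i\<in>{1..l}. C i \<noteq> {} \<and> C i \<subseteq> Rk (ms i) \<and> vclosed (ms i) (C i) \<and> vconvex (C i)"
    and hA: "\<forall>i\<in>{1..l}. \<exists>r<ms i. \<exists>c<n. A i r c \<noteq> 0"
    and hv: "vbar \<in> Rk n"
    and hint: "\<exists>z\<in>Rk n. \<forall>i\<in>{1..l}. mv (ms i) n (A i) z \<in> C i"
    and hgam: "\<forall>i\<in>{1..l}. gam i = lam_max n (mtm (ms i) n (A i))"
    and hy0: "\<forall>i\<in>{1..l}. y 0 i = (\<lambda>_. 0)"
    and hpad: "\<forall>t i. i \<notin> {1..l} \<longrightarrow> y t i = (\<lambda>_. 0)"
    and hx0: "x 0 l = vbar"
    and hxs: "\<forall>t. x (Suc t) 0 = x t l"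
    and hxi: "\<forall>t. \<forall>i\<in>{1..l}. x (Suc t) i =
         (\<lambda>j. x (Suc t) (i - 1) j
               - (1 / gam i) * mtv (ms i) n (A i) (mv (ms i) n (A i) (x (Suc t) (i - 1))) j
               + (1 / gam i) * mtv (ms i) n (A i)
                   (vproj (ms i) (C i) (\<lambda>k. gam i * y t i k + mv (ms i) n (A i) (x (Suc t) (i - 1)) k)) j)"
    and hyi: "\<forall>t. \<forall>i\<in>{1..l}. y (Suc t) i =
         (\<lambda>k. y t i k + (1 / gam i) * mv (ms i) n (A i) (x (Suc t) (i - 1)) k
               - (1 / gam i) * vproj (ms i) (C i)
                   (\<lambda>k'. gam i * y t i k' + mv (ms i) n (A i) (x (Suc t) (i - 1)) k') k)"
  shows
    "(\<forall>t. \<forall>i\<in>{1..l}.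
        dfun l ms n A vbar C (mixb (y (Suc t)) (y t) i)
          - dfun l ms n A vbar C (mixb (y (Suc t)) (y t) (i - 1))
        \<le> ereal (1/2) *
           (ereal (vinner (ms i) (gradg l ms n A vbar i (mixb (y (Suc t)) (y t) (i - 1)))
                                 (vsub (y (Suc t) i) (y t i)))
            + sigD l ms C (mixb (y (Suc t)) (y t) i)
            - sigD l ms C (mixb (y (Suc t)) (y t) (i - 1)))
      \<and> ereal (1/2) *
           (ereal (vinner (ms i) (gradg l ms n A vbar i (mixb (y (Suc t)) (y t) (i - 1)))
                                 (vsub (y (Suc t) i) (y t i)))
            + sigD l ms C (mixb (y (Suc t)) (y t) i)
            - sigD l ms C (mixb (y (Suc t)) (y t) (i - 1)))
        \<le> ereal (- (gam i / 2) * (vnorm (ms i) (vsub (y (Suc t) i) (y t i)))\<^sup>2))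
     \<and> (\<exists>c>0. \<forall>t. dfun l ms n A vbar C (y (Suc t)) - dfun l ms n A vbar C (y t)
                  \<le> ereal (- c * (bnorm l ms (bsub (y (Suc t)) (y t)))\<^sup>2))
     \<and> (\<lambda>t. bnorm l ms (bsub (y (Suc t)) (y t))) \<longlonglongrightarrow> 0
     \<and> (\<lambda>t. dist0 l ms (subdiff l ms (dfun l ms n A vbar C) (y t))) \<longlonglongrightarrow> 0
     \<and> (\<forall>Ys\<in>BS l ms. (\<exists>r. strict_mono r \<and> (\<lambda>t. bnorm l ms (bsub (y (r t)) Ys)) \<longlonglongrightarrow> 0)
          \<longrightarrow> (\<forall>Z\<in>BS l ms. dfun l ms n A vbar C Ys \<le> dfun l ms n A vbar C Z))"
proof -
  have fin: "\<forall>i\<in>{1..l}. finite {lam. \<exists>v\<in>Rk n. v \<noteq> (\<lambda>_. 0) \<and> mv n n (mtm (ms i) n (A i)) v = (\<lambda>j. lam * v j)}"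
    using eig_finite by blast
  interpret algctx l n ms C A vbar gam x y
    using assms fin by (intro algctx.intro) assumption+
  show ?thesis by (rule main)
qed

end
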